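(* With $N_U(B)$ as defined below, let $\mathcal{N}(B)$ be the number of $(\eta_1,\dots,\eta_8,\alpha_1,\alpha_2,\alpha_3)\in\mathbb{Z}^{11}$ satisfying $$\eta_1^2\eta_2\alpha_1^3+\eta_7\alpha_2^2+\eta_4\eta_5^2\eta_6^3\eta_8^4\alpha_3=0,$$ $\eta_1,\dots,\eta_8,\alpha_2\ge1$, the height conditions $$\eta_1^2\eta_2^4\eta_3^6\eta_4^5\eta_5^4\eta_6^3\eta_7^3\eta_8^2\le B,\quad |\eta_1^2\eta_2^3\eta_3^4\eta_4^3\eta_5^2\eta_6\eta_7^2\alpha_1|\le B,\quad |\alpha_3|\le B,\quad \eta_1^3\eta_2^6\eta_3^9\eta_4^7\eta_5^5\eta_6^3\eta_7^5\eta_8\alpha_2\le B^2,$$ and the coprimality conditions $\gcd(\alpha_1,\eta_2\cdots\eta_8)=\gcd(\alpha_2,\eta_1\cdots\eta_6\eta_8)=\gcd(\alpha_3,\eta_1\cdots\eta_7)=1$, $\gcd(\eta_8,\eta_1\cdots\eta_5\eta_7)=\gcd(\eta_7,\eta_1\eta_2\eta_4\eta_5\eta_6)=\gcd(\eta_6,\eta_1\cdots\eta_4)=1$, $\gcd(\eta_5,\eta_1\eta_2\eta_3)=\gcd(\eta_4,\eta_1\eta_2)=\gcd(\eta_3,\eta_1)=1$. Then $N_U(B)=2\mathcal{N}(B)+O(B^{2/3})$.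
   Context: $N_U(B)=\frac12\#\{\mathbf{x}=(x_0,x_1,x_2,x_3)\in\mathbb{Z}^4:\ x_0^2=x_1x_2^3+x_1^3x_3,\ x_1\ne0,\ \gcd(x_1,x_2,x_3)=1,\ |x_i|\le B\ (1\le i\le3),\ |x_0|\le B^2\}$. *)

theory Defs
  imports Complex_Main "HOL-Library.Landau_Symbols"
begin

definition NU_set :: "real \<Rightarrow> (int \<times> int \<times> int \<times> int) set" where
  "NU_set B = {(x0, x1, x2, x3).
      x0^2 = x1 * x2^3 + x1^3 * x3 \<and> x1 \<noteq> 0 \<and> gcd x1 (gcd x2 x3) = 1 \<and>
      real_of_int \<bar>x1\<bar> \<le> B \<and> real_of_int \<bar>x2\<bar> \<le> B \<and> real_of_int \<bar>x3\<bar> \<le> B \<and>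
      real_of_int \<bar>x0\<bar> \<le> B^2}"

definition N_U :: "real \<Rightarrow> real" where
  "N_U B = real (card (NU_set B)) / 2"

definition torsor_cond :: "real \<Rightarrow> int \<Rightarrow> int \<Rightarrow> int \<Rightarrow> int \<Rightarrow> int \<Rightarrow> int \<Rightarrow> int \<Rightarrow> int
    \<Rightarrow> int \<Rightarrow> int \<Rightarrow> int \<Rightarrow> bool" where
  "torsor_cond B e1 e2 e3 e4 e5 e6 e7 e8 a1 a2 a3 \<longleftrightarrow>
     e1^2 * e2 * a1^3 + e7 * a2^2 + e4 * e5^2 * e6^3 * e8^4 * a3 = 0 \<and>
     e1 \<ge> 1 \<and> e2 \<ge> 1 \<and> e3 \<ge> 1 \<and> e4 \<ge> 1 \<and> e5 \<ge> 1 \<and> e6 \<ge> 1 \<and> e7 \<ge> 1 \<and> e8 \<ge> 1 \<and>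
     a2 \<ge> 1 \<and>
     real_of_int (e1^2 * e2^4 * e3^6 * e4^5 * e5^4 * e6^3 * e7^3 * e8^2) \<le> B \<and>
     real_of_int \<bar>e1^2 * e2^3 * e3^4 * e4^3 * e5^2 * e6 * e7^2 * a1\<bar> \<le> B \<and>
     real_of_int \<bar>a3\<bar> \<le> B \<and>
     real_of_int (e1^3 * e2^6 * e3^9 * e4^7 * e5^5 * e6^3 * e7^5 * e8 * a2) \<le> B^2 \<and>
     gcd a1 (e2 * e3 * e4 * e5 * e6 * e7 * e8) = 1 \<and>
     gcd a2 (e1 * e2 * e3 * e4 * e5 * e6 * e8) = 1 \<and>
     gcd a3 (e1 * e2 * e3 * e4 * e5 * e6 * e7) = 1 \<and>
     gcd e8 (e1 * e2 * e3 * e4 * e5 * e7) = 1 \<and>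
     gcd e7 (e1 * e2 * e4 * e5 * e6) = 1 \<and>
     gcd e6 (e1 * e2 * e3 * e4) = 1 \<and>
     gcd e5 (e1 * e2 * e3) = 1 \<and>
     gcd e4 (e1 * e2) = 1 \<and>
     gcd e3 e1 = 1"

definition N_set :: "real \<Rightarrow> (int \<times> int \<times> int \<times> int \<times> int \<times> int \<times> int \<times> int \<times> int \<times> int \<times> int) set" where
  "N_set B = {(e1, e2, e3, e4, e5, e6, e7, e8, a1, a2, a3).
      torsor_cond B e1 e2 e3 e4 e5 e6 e7 e8 a1 a2 a3}"

definition calN :: "real \<Rightarrow> real" where
  "calN B = real (card (N_set B))"

end

theory Submission
  imports Defs "HOL-Computational_Algebra.Primes" "HOL-Computational_Algebra.Nth_Powers"
begin

definition "f8 (a::nat) (b::nat) (d::nat) = (if 3*b \<le> a then (a - 3*b) div 2 else 0)"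
definition "f6 (a::nat) (b::nat) (d::nat) = (if 3*b \<le> a then b else if 2*b \<le> a then a - 2*b else 0)"
definition "f5 (a::nat) (b::nat) (d::nat) = (if 3*b \<le> a then 0 else if 2*b \<le> a then (3*b - a) div 2 else if 5*b \<le> 3*a then (3*a - 5*b) div 2 else 0)"
definition "f4 (a::nat) (b::nat) (d::nat) = (if 2*b \<le> a then 0 else if 5*b \<le> 3*a then 2*b - a else if 3*b < 2*a then 2*a - 3*b else 0)"
definition "f7 (a::nat) (b::nat) (d::nat) = (if 3*b = 2*a then min (a div 3) (2*d - 3*a) else 0)"
definition "f3 (a::nat) (b::nat) (d::nat) = (if 5*b \<le> 3*a then 0 else if 3*b < 2*a then (5*b - 3*a) div 2 else if 3*b = 2*a then (a div 3 - min (a div 3) (2*d - 3*a)) div 2 else if 4*b \<le> 3*a then (3*a - 4*b) div 2 else 0)"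
definition "f2 (a::nat) (b::nat) (d::nat) = (if 3*b \<le> 2*a then 0 else if 4*b \<le> 3*a then 3*b - 2*a else if b \<le> a then a - b else 0)"
definition "f1 (a::nat) (b::nat) (d::nat) = (if 4*b \<le> 3*a then 0 else if b \<le> a then (4*b - 3*a) div 2 else a div 2)"

lemmas fdefs = f1_def f2_def f3_def f4_def f5_def f6_def f7_def f8_def


lemma L1: fixes k m a b d :: nat shows "a = 3*m+2*k \<Longrightarrow> b = m \<Longrightarrow> d = 3*m+k \<Longrightarrow> f1 a b d = 0 \<and> f2 a b d = 0 \<and> f3 a b d = 0 \<and> f4 a b d = 0 \<and> f5 a b d = 0 \<and> f6 a b d = m \<and> f7 a b d = 0 \<and> f8 a b d = k"
  unfolding fdefs by (cases "k=0"; cases "m=0"; simp)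

lemma L2: fixes m n a b d :: nat shows "a = 3*m+4*n \<Longrightarrow> b = m+2*n \<Longrightarrow> d = 3*m+5*n \<Longrightarrow> f1 a b d = 0 \<and> f2 a b d = 0 \<and> f3 a b d = 0 \<and> f4 a b d = 0 \<and> f5 a b d = n \<and> f6 a b d = m \<and> f7 a b d = 0 \<and> f8 a b d = 0"
  unfolding fdefs by (cases "m=0"; cases "n=0"; simp)

lemma L3: fixes n k a b d :: nat shows "a = 4*n+5*k \<Longrightarrow> b = 2*n+3*k \<Longrightarrow> d = 5*n+7*k \<Longrightarrow> f1 a b d = 0 \<and> f2 a b d = 0 \<and> f3 a b d = 0 \<and> f4 a b d = k \<and> f5 a b d = n \<and> f6 a b d = 0 \<and> f7 a b d = 0 \<and> f8 a b d = 0"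
  unfolding fdefs by (cases "n=0"; cases "k=0"; simp)

lemma L4: fixes k j a b d :: nat shows "a = 5*k+6*j \<Longrightarrow> b = 3*k+4*j \<Longrightarrow> d = 7*k+9*j \<Longrightarrow> f1 a b d = 0 \<and> f2 a b d = 0 \<and> f3 a b d = j \<and> f4 a b d = k \<and> f5 a b d = 0 \<and> f6 a b d = 0 \<and> f7 a b d = 0 \<and> f8 a b d = 0"
  unfolding fdefs by (cases "k=0"; cases "j=0"; simp)

lemma L5: fixes j l a b d :: nat shows "a = 6*j+3*l \<Longrightarrow> b = 4*j+2*l \<Longrightarrow> d = 9*j+5*l \<Longrightarrow> f1 a b d = 0 \<and> f2 a b d = 0 \<and> f3 a b d = j \<and> f4 a b d = 0 \<and> f5 a b d = 0 \<and> f6 a b d = 0 \<and> f7 a b d = l \<and> f8 a b d = 0"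
  unfolding fdefs by (cases "j=0"; cases "l=0"; simp)

lemma L5b: fixes l r a b d :: nat shows "a = 3*l \<Longrightarrow> b = 2*l \<Longrightarrow> d = 5*l+r \<Longrightarrow> f1 a b d = 0 \<and> f2 a b d = 0 \<and> f3 a b d = 0 \<and> f4 a b d = 0 \<and> f5 a b d = 0 \<and> f6 a b d = 0 \<and> f7 a b d = l \<and> f8 a b d = 0"
  unfolding fdefs by (cases "l=0"; cases "r=0"; simp)

lemma L6: fixes j i a b d :: nat shows "a = 6*j+4*i \<Longrightarrow> b = 4*j+3*i \<Longrightarrow> d = 9*j+6*i \<Longrightarrow> f1 a b d = 0 \<and> f2 a b d = i \<and> f3 a b d = j \<and> f4 a b d = 0 \<and> f5 a b d = 0 \<and> f6 a b d = 0 \<and> f7 a b d = 0 \<and> f8 a b d = 0"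
  unfolding fdefs by (cases "j=0"; cases "i=0"; simp)

lemma L7: fixes i h a b d :: nat shows "a = 4*i+2*h \<Longrightarrow> b = 3*i+2*h \<Longrightarrow> d = 6*i+3*h \<Longrightarrow> f1 a b d = h \<and> f2 a b d = i \<and> f3 a b d = 0 \<and> f4 a b d = 0 \<and> f5 a b d = 0 \<and> f6 a b d = 0 \<and> f7 a b d = 0 \<and> f8 a b d = 0"
  unfolding fdefs by (cases "i=0"; cases "h=0"; simp)

lemma L8: fixes h s a b d :: nat shows "a = 2*h \<Longrightarrow> b = 2*h+s \<Longrightarrow> d = 3*h \<Longrightarrow> f1 a b d = h \<and> f2 a b d = 0 \<and> f3 a b d = 0 \<and> f4 a b d = 0 \<and> f5 a b d = 0 \<and> f6 a b d = 0 \<and> f7 a b d = 0 \<and> f8 a b d = 0"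
  unfolding fdefs by (cases "h=0"; cases "s=0"; simp)

lemma L9: fixes s r a b d :: nat shows "a = 0 \<Longrightarrow> b = s \<Longrightarrow> d = r \<Longrightarrow> f1 a b d = 0 \<and> f2 a b d = 0 \<and> f3 a b d = 0 \<and> f4 a b d = 0 \<and> f5 a b d = 0 \<and> f6 a b d = 0 \<and> f7 a b d = 0 \<and> f8 a b d = 0"
  unfolding fdefs by (cases "s=0"; cases "r=0"; simp)

definition "Pc (E1::nat) E2 E3 E4 E5 E6 E7 E8 (A1::nat) (A2::nat) \<longleftrightarrow>
  (E8 = 0 \<or> (E1=0 \<and> E2=0 \<and> E3=0 \<and> E4=0 \<and> E5=0 \<and> E7=0)) \<and>
  (E7 = 0 \<or> (E1=0 \<and> E2=0 \<and> E4=0 \<and> E5=0 \<and> E6=0)) \<and>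
  (E6 = 0 \<or> (E1=0 \<and> E2=0 \<and> E3=0 \<and> E4=0)) \<and>
  (E5 = 0 \<or> (E1=0 \<and> E2=0 \<and> E3=0)) \<and>
  (E4 = 0 \<or> (E1=0 \<and> E2=0)) \<and>
  (E3 = 0 \<or> E1=0) \<and>
  (A1 = 0 \<or> (E2=0 \<and> E3=0 \<and> E4=0 \<and> E5=0 \<and> E6=0 \<and> E7=0 \<and> E8=0)) \<and>
  (A2 = 0 \<or> (E1=0 \<and> E2=0 \<and> E3=0 \<and> E4=0 \<and> E5=0 \<and> E6=0 \<and> E8=0))"


lemma phi_arith:
  assumes P: "Pc E1 E2 E3 E4 E5 E6 E7 E8 A1 A2"
  defines "a \<equiv> 2*E1+4*E2+6*E3+5*E4+4*E5+3*E6+3*E7+2*E8"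
    and "b \<equiv> 2*E1+3*E2+4*E3+3*E4+2*E5+E6+2*E7+A1"
    and "d \<equiv> 3*E1+6*E2+9*E3+7*E4+5*E5+3*E6+5*E7+E8+A2"
  shows "f1 a b d = E1 \<and> f2 a b d = E2 \<and> f3 a b d = E3 \<and> f4 a b d = E4 \<and>
         f5 a b d = E5 \<and> f6 a b d = E6 \<and> f7 a b d = E7 \<and> f8 a b d = E8"
proof (cases "E8 = 0")
  case False
  with P have z: "E1=0" "E2=0" "E3=0" "E4=0" "E5=0" "E7=0" "A1=0" "A2=0" unfolding Pc_def by auto
  show ?thesis proof -
 have "a = 3*E6+2*E8" "b = E6" "d = 3*E6+E8" using z unfolding a_def b_def d_def by simp_all
 from L1[OF this] z show ?thesis by simp
 qed
next
  case E8: True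
  show ?thesis
  proof (cases "E6 = 0")
    case False
    with P E8 have z: "E1=0" "E2=0" "E3=0" "E4=0" "E7=0" "A1=0" "A2=0" unfolding Pc_def by auto
    show ?thesis proof -
 have "a = 3*E6+4*E5" "b = E6+2*E5" "d = 3*E6+5*E5" using z E8 unfolding a_def b_def d_def by simp_all
 from L2[OF this] z E8 show ?thesis by simp
 qed
  next
    case E6: True
    show ?thesis
    proof (cases "E5 = 0")
      case False
      with P E8 E6 have z: "E1=0" "E2=0" "E3=0" "E7=0" "A1=0" "A2=0" unfolding Pc_def by auto
      show ?thesis proof -
 have "a = 4*E5+5*E4" "b = 2*E5+3*E4" "d = 5*E5+7*E4" using z E8 E6 unfolding a_def b_def d_def by simp_all
 from L3[OF this] z E8 E6 show ?thesis by simp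
 qed
    next
      case E5: True
      show ?thesis
      proof (cases "E4 = 0")
        case False
        with P E8 E6 E5 have z: "E1=0" "E2=0" "E7=0" "A1=0" "A2=0" unfolding Pc_def by auto
        show ?thesis proof -
 have "a = 5*E4+6*E3" "b = 3*E4+4*E3" "d = 7*E4+9*E3" using z E8 E6 E5 unfolding a_def b_def d_def by simp_all
 from L4[OF this] z E8 E6 E5 show ?thesis by simp
 qed
      next
        case E4: True
        show ?thesis
        proof (cases "E3 = 0")
          case False
          with P E8 E6 E5 E4 have z: "E1=0" "A1=0" "A2=0" "E2 = 0 \<or> E7 = 0" unfolding Pc_def by auto
          from z(4) show ?thesis
          proof
            assume w: "E2 = 0"
            show ?thesis proof -
 have "a = 6*E3+3*E7" "b = 4*E3+2*E7" "d = 9*E3+5*E7" using w z E8 E6 E5 E4 unfolding a_def b_def d_def by simp_all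
 from L5[OF this] w z E8 E6 E5 E4 show ?thesis by simp
 qed
          next
            assume w: "E7 = 0"
            show ?thesis proof -
 have "a = 6*E3+4*E2" "b = 4*E3+3*E2" "d = 9*E3+6*E2" using w z E8 E6 E5 E4 unfolding a_def b_def d_def by simp_all
 from L6[OF this] w z E8 E6 E5 E4 show ?thesis by simp
 qed
          qed
        next
          case E3: True
          show ?thesis
          proof (cases "E7 = 0")
            case False
            with P E8 E6 E5 E4 E3 have z: "E1=0" "E2=0" "A1=0" unfolding Pc_def by auto
            show ?thesis proof -
 have "a = 3*E7" "b = 2*E7" "d = 5*E7+A2" using z E8 E6 E5 E4 E3 unfolding a_def b_def d_def by simp_all
 from L5b[OF this] z E8 E6 E5 E4 E3 show ?thesis by simp
 qed
          next
            case E7: True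
            show ?thesis
            proof (cases "E2 = 0")
              case False
              with P E8 E6 E5 E4 E3 E7 have z: "A1=0" "A2=0" unfolding Pc_def by auto
              show ?thesis proof -
 have "a = 4*E2+2*E1" "b = 3*E2+2*E1" "d = 6*E2+3*E1" using z E8 E6 E5 E4 E3 E7 unfolding a_def b_def d_def by simp_all
 from L7[OF this] z E8 E6 E5 E4 E3 E7 show ?thesis by simp
 qed
            next
              case E2: True
              show ?thesis
              proof (cases "E1 = 0")
                case False
                with P E8 E6 E5 E4 E3 E7 E2 have z: "A2=0" unfolding Pc_def by auto
                show ?thesis proof -
 have "a = 2*E1" "b = 2*E1+A1" "d = 3*E1" using z E8 E6 E5 E4 E3 E7 E2 unfolding a_def b_def d_def by simp_all
 from L8[OF this] z E8 E6 E5 E4 E3 E7 E2 show ?thesis by simp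
 qed
              next
                case E1: True
                show ?thesis proof -
 have "a = 0" "b = A1" "d = A2" using E1 E8 E6 E5 E4 E3 E7 E2 unfolding a_def b_def d_def by simp_all
 from L9[OF this] E1 E8 E6 E5 E4 E3 E7 E2 show ?thesis by simp
 qed
              qed
            qed
          qed
        qed
      qed
    qed
  qed
qed



lemma psi_decomp:
  fixes a b d :: nat
  assumes C: "0 < a \<longrightarrow> (3*b < 2*a \<longrightarrow> 2*d = a + 3*b) \<and> (3*b = 2*a \<longrightarrow> 3*a \<le> 2*d) \<and> (2*a < 3*b \<longrightarrow> 2*d = 3*a)"
  shows "\<exists>E1 E2 E3 E4 E5 E6 E7 E8 A1 A2. Pc E1 E2 E3 E4 E5 E6 E7 E8 A1 A2 \<and>
     a = 2*E1+4*E2+6*E3+5*E4+4*E5+3*E6+3*E7+2*E8 \<and>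
     b = 2*E1+3*E2+4*E3+3*E4+2*E5+E6+2*E7+A1 \<and>
     d = 3*E1+6*E2+9*E3+7*E4+5*E5+3*E6+5*E7+E8+A2"
proof (cases "a = 0")
  case True
  show ?thesis
    by (rule exI[of _ "0"], rule exI[of _ "0"], rule exI[of _ "0"], rule exI[of _ "0"], rule exI[of _ "0"], rule exI[of _ "0"], rule exI[of _ "0"], rule exI[of _ "0"], rule exI[of _ "b"], rule exI[of _ "d"]) (simp add: Pc_def True)
next
  case False
  then have C: "3*b < 2*a \<Longrightarrow> 2*d = a + 3*b" "3*b = 2*a \<Longrightarrow> 3*a \<le> 2*d" "2*a < 3*b \<Longrightarrow> 2*d = 3*a" using C by simp_all
  have "(3*b \<le> a) \<or> (a < 3*b \<and> 2*b \<le> a) \<or> (a < 2*b \<and> 5*b \<le> 3*a) \<or> (3*a < 5*b \<and> 3*b < 2*a) \<or> (3*b = 2*a \<and> 2*d \<le> 10*(a-b)) \<or> (3*b = 2*a \<and> \<not> 2*d \<le> 10*(a-b)) \<or> (2*a < 3*b \<and> 4*b \<le> 3*a) \<or> (3*a < 4*b \<and> b \<le> a) \<or> (a < b)" by auto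
  then consider "3*b \<le> a" | "a < 3*b" "2*b \<le> a" | "a < 2*b" "5*b \<le> 3*a" | "3*a < 5*b" "3*b < 2*a" | "3*b = 2*a" "2*d \<le> 10*(a-b)" | "3*b = 2*a" "\<not> 2*d \<le> 10*(a-b)" | "2*a < 3*b" "4*b \<le> 3*a" | "3*a < 4*b" "b \<le> a" | "a < b" by blast
  then show ?thesis
  proof cases
  
    case 1 show ?thesis by (rule exI[of _ "0"], rule exI[of _ "0"], rule exI[of _ "0"], rule exI[of _ "0"], rule exI[of _ "0"], rule exI[of _ "b"], rule exI[of _ "0"], rule exI[of _ "d-3*b"], rule exI[of _ "0"], rule exI[of _ "0"]) (use C 1 False in \<open>simp add: Pc_def; linarith\<close>)
  next
    case 2 show ?thesis by (rule exI[of _ "0"], rule exI[of _ "0"], rule exI[of _ "0"], rule exI[of _ "0"], rule exI[of _ "d-a"], rule exI[of _ "a-2*b"], rule exI[of _ "0"], rule exI[of _ "0"], rule exI[of _ "0"], rule exI[of _ "0"]) (use C 2 False in \<open>simp add: Pc_def; linarith\<close>)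
  next
    case 3 show ?thesis by (rule exI[of _ "0"], rule exI[of _ "0"], rule exI[of _ "0"], rule exI[of _ "2*b-a"], rule exI[of _ "d+a-4*b"], rule exI[of _ "0"], rule exI[of _ "0"], rule exI[of _ "0"], rule exI[of _ "0"], rule exI[of _ "0"]) (use C 3 False in \<open>simp add: Pc_def; linarith\<close>)
  next
    case 4 show ?thesis by (rule exI[of _ "0"], rule exI[of _ "0"], rule exI[of _ "d+b-2*a"], rule exI[of _ "2*a-3*b"], rule exI[of _ "0"], rule exI[of _ "0"], rule exI[of _ "0"], rule exI[of _ "0"], rule exI[of _ "0"], rule exI[of _ "0"]) (use C 4 False in \<open>simp add: Pc_def; linarith\<close>)
  next
    case 5 show ?thesis by (rule exI[of _ "0"], rule exI[of _ "0"], rule exI[of _ "5*(a-b)-d"], rule exI[of _ "0"], rule exI[of _ "0"], rule exI[of _ "0"], rule exI[of _ "2*d-9*(a-b)"], rule exI[of _ "0"], rule exI[of _ "0"], rule exI[of _ "0"]) (use C 5 False in \<open>simp add: Pc_def; linarith\<close>)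
  next
    case 6 show ?thesis by (rule exI[of _ "0"], rule exI[of _ "0"], rule exI[of _ "0"], rule exI[of _ "0"], rule exI[of _ "0"], rule exI[of _ "0"], rule exI[of _ "a-b"], rule exI[of _ "0"], rule exI[of _ "0"], rule exI[of _ "d-5*(a-b)"]) (use C 6 False in \<open>simp add: Pc_def; linarith\<close>)
  next
    case 7 show ?thesis by (rule exI[of _ "0"], rule exI[of _ "3*b-2*a"], rule exI[of _ "d-2*b"], rule exI[of _ "0"], rule exI[of _ "0"], rule exI[of _ "0"], rule exI[of _ "0"], rule exI[of _ "0"], rule exI[of _ "0"], rule exI[of _ "0"]) (use C 7 False in \<open>simp add: Pc_def; linarith\<close>)
  next
    case 8 show ?thesis by (rule exI[of _ "2*b-d"], rule exI[of _ "a-b"], rule exI[of _ "0"], rule exI[of _ "0"], rule exI[of _ "0"], rule exI[of _ "0"], rule exI[of _ "0"], rule exI[of _ "0"], rule exI[of _ "0"], rule exI[of _ "0"]) (use C 8 False in \<open>simp add: Pc_def; linarith\<close>)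
  next
    case 9 show ?thesis by (rule exI[of _ "d-a"], rule exI[of _ "0"], rule exI[of _ "0"], rule exI[of _ "0"], rule exI[of _ "0"], rule exI[of _ "0"], rule exI[of _ "0"], rule exI[of _ "0"], rule exI[of _ "b-a"], rule exI[of _ "0"]) (use C 9 False in \<open>simp add: Pc_def; linarith\<close>)
  qed
qed


lemma psi_arith:
  fixes a b d :: nat
  assumes C: "0 < a \<longrightarrow> (3*b < 2*a \<longrightarrow> 2*d = a + 3*b) \<and> (3*b = 2*a \<longrightarrow> 3*a \<le> 2*d) \<and> (2*a < 3*b \<longrightarrow> 2*d = 3*a)"
  defines "F1 \<equiv> f1 a b d" and "F2 \<equiv> f2 a b d" and "F3 \<equiv> f3 a b d" and "F4 \<equiv> f4 a b d"
    and "F5 \<equiv> f5 a b d" and "F6 \<equiv> f6 a b d" and "F7 \<equiv> f7 a b d" and "F8 \<equiv> f8 a b d"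
  shows "a = 2*F1+4*F2+6*F3+5*F4+4*F5+3*F6+3*F7+2*F8" (is ?g1)
  and "\<exists>A1. b = 2*F1+3*F2+4*F3+3*F4+2*F5+F6+2*F7+A1 \<and> (A1 = 0 \<or> (F2=0 \<and> F3=0 \<and> F4=0 \<and> F5=0 \<and> F6=0 \<and> F7=0 \<and> F8=0))" (is ?g2)
  and "\<exists>A2. d = 3*F1+6*F2+9*F3+7*F4+5*F5+3*F6+5*F7+F8+A2 \<and> (A2 = 0 \<or> (F1=0 \<and> F2=0 \<and> F3=0 \<and> F4=0 \<and> F5=0 \<and> F6=0 \<and> F8=0))" (is ?g3)
  and "Pc F1 F2 F3 F4 F5 F6 F7 F8 0 0" (is ?g4)
  and "b = 0 \<Longrightarrow> F1=0 \<and> F2=0 \<and> F3=0 \<and> F4=0 \<and> F5=0 \<and> F6=0 \<and> F7=0"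
proof -
  obtain E1 E2 E3 E4 E5 E6 E7 E8 A1 A2 where P: "Pc E1 E2 E3 E4 E5 E6 E7 E8 A1 A2"
    and ab: "a = 2*E1+4*E2+6*E3+5*E4+4*E5+3*E6+3*E7+2*E8"
     "b = 2*E1+3*E2+4*E3+3*E4+2*E5+E6+2*E7+A1"
     "d = 3*E1+6*E2+9*E3+7*E4+5*E5+3*E6+5*E7+E8+A2"
    using psi_decomp[OF C] by (elim exE conjE) (rule that; assumption)
  have F: "F1 = E1" "F2 = E2" "F3 = E3" "F4 = E4" "F5 = E5" "F6 = E6" "F7 = E7" "F8 = E8"
    using phi_arith[OF P] unfolding F1_def F2_def F3_def F4_def F5_def F6_def F7_def F8_def ab by simp_all
  show ?g1 unfolding F by (rule ab(1))
  have P1: "(A1 = 0 \<or> (E2=0 \<and> E3=0 \<and> E4=0 \<and> E5=0 \<and> E6=0 \<and> E7=0 \<and> E8=0))"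
    using P unfolding Pc_def by (elim conjE) assumption
  have P2: "(A2 = 0 \<or> (E1=0 \<and> E2=0 \<and> E3=0 \<and> E4=0 \<and> E5=0 \<and> E6=0 \<and> E8=0))"
    using P unfolding Pc_def by (elim conjE) assumption
  show ?g2 unfolding F by (rule exI[of _ A1]) (use ab(2) P1 in simp)
  show ?g3 unfolding F by (rule exI[of _ A2]) (use ab(3) P2 in simp)
  show ?g4 using P unfolding F Pc_def by (elim conjE) (intro conjI; assumption | simp)
  show "b = 0 \<Longrightarrow> F1=0 \<and> F2=0 \<and> F3=0 \<and> F4=0 \<and> F5=0 \<and> F6=0 \<and> F7=0" using ab(2) unfolding F by simp
qed


lemma mult_sum_eq:
  fixes p X Y :: int
  assumes p: "prime p" and X: "X \<noteq> 0" and m: "multiplicity p X = m" and Y: "p ^ Suc m dvd Y"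
  shows "multiplicity p (X + Y) = m"
proof (rule multiplicity_eqI)
  have "p ^ m dvd X" using m multiplicity_dvd by blast
  moreover have "p ^ m dvd Y" using Y by (meson dvd_trans le_imp_power_dvd le_SucI order_refl)
  ultimately show "p ^ m dvd X + Y" by simp
  show "\<not> p ^ Suc m dvd X + Y"
  proof
    assume "p ^ Suc m dvd X + Y"
    then have "p ^ Suc m dvd X" using Y by (metis add_diff_cancel_right' dvd_diff)
    then have "Suc m \<le> multiplicity p X" using X p by (intro multiplicity_geI) auto
    then show False using m by simp
  qed
qed

lemma prime_dvd_gcd_contra:
  fixes p a b :: int
  assumes "gcd a b = 1" "prime p" "p dvd a" "p dvd b"
  shows False
proof -
  have "p dvd gcd a b" using assms(3,4) by (rule gcd_greatest)
  then have "p dvd 1" using assms(1) by simp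
  then show False using assms(2) not_prime_unit by blast
qed

lemma gcd_one_primes:
  fixes a b :: int
  assumes "\<And>p. prime p \<Longrightarrow> p dvd a \<Longrightarrow> p dvd b \<Longrightarrow> False"
  shows "gcd a b = 1"
proof (rule ccontr)
  assume ne: "gcd a b \<noteq> 1"
  show False
  proof (cases "gcd a b = 0")
    case True
    then have "a = 0" "b = 0" by auto
    then show False using assms[of 2] by simp
  next
    case False
    have "\<not> is_unit (gcd a b)" using ne by (simp add: is_unit_gcd_iff)
    then obtain p where "p dvd gcd a b" "prime p" using prime_divisor_exists[OF False] by blast
    then show False using assms[of p] by auto
  qed
qed

lemma mult_pos_iff:
  fixes p x :: int
  assumes "prime p" "x \<noteq> 0"
  shows "p dvd x \<longleftrightarrow> 0 < multiplicity p x"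
  using prime_multiplicity_gt_zero_iff[OF prime_imp_prime_elem[OF assms(1)] assms(2)] by simp

definition vb :: "int \<Rightarrow> int \<Rightarrow> int \<Rightarrow> nat" where
  "vb x1 x2 p = (if x2 = 0 then multiplicity p x1 + 1 else multiplicity p x2)"

lemma val_constraint:
  fixes x0 x1 x2 x3 p :: int
  assumes eq: "x0^2 = x1 * x2^3 + x1^3 * x3" and x1: "x1 > 0" and x0: "x0 > 0"
    and g: "gcd x1 (gcd x2 x3) = 1" and p: "prime p"
  defines "a \<equiv> multiplicity p x1" and "b \<equiv> vb x1 x2 p" and "d \<equiv> multiplicity p x0"
  shows "0 < a \<longrightarrow> (3*b < 2*a \<longrightarrow> 2*d = a + 3*b) \<and> (3*b = 2*a \<longrightarrow> 3*a \<le> 2*d) \<and> (2*a < 3*b \<longrightarrow> 2*d = 3*a)"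
    and "0 < a \<Longrightarrow> p dvd x3 \<Longrightarrow> b = 0"
proof -
  have pe: "prime_elem p" using p by (rule prime_imp_prime_elem)
  have x0n: "x0 \<noteq> 0" "x1 \<noteq> 0" using x0 x1 by auto
  have d2: "multiplicity p (x0^2) = 2*d" unfolding d_def using pe x0n by (simp add: prime_elem_multiplicity_power_distrib)
  have nd3: "\<not> p dvd x3" if "0 < a" "p dvd x2" for x2' :: int
  proof
    assume "p dvd x3"
    have "p dvd x1" using that(1) x0n p mult_pos_iff unfolding a_def by blast
    then show False using prime_dvd_gcd_contra[OF g p] that(2) \<open>p dvd x3\<close> by simp
  qed
  show "0 < a \<Longrightarrow> p dvd x3 \<Longrightarrow> b = 0"
  proof -
    assume a: "0 < a" "p dvd x3"
    have "x2 \<noteq> 0" using nd3[OF a(1)] a(2) by auto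
    moreover have "\<not> p dvd x2" using nd3[OF a(1)] a(2) by auto
    ultimately show "b = 0" unfolding b_def vb_def using p by (simp add: not_dvd_imp_multiplicity_0)
  qed
  show "0 < a \<longrightarrow> (3*b < 2*a \<longrightarrow> 2*d = a + 3*b) \<and> (3*b = 2*a \<longrightarrow> 3*a \<le> 2*d) \<and> (2*a < 3*b \<longrightarrow> 2*d = 3*a)"
  proof
    assume a: "0 < a"
    show "(3*b < 2*a \<longrightarrow> 2*d = a + 3*b) \<and> (3*b = 2*a \<longrightarrow> 3*a \<le> 2*d) \<and> (2*a < 3*b \<longrightarrow> 2*d = 3*a)"
    proof (cases "x2 = 0")
      case True
      then have b: "b = a + 1" unfolding b_def vb_def a_def by simp
      have "p dvd x2" using True by simp
      then have n3: "\<not> p dvd x3" using nd3[OF a] by blast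
      then have x3n: "x3 \<noteq> 0" by auto
      have m3: "multiplicity p x3 = 0" using n3 by (simp add: not_dvd_imp_multiplicity_0)
      have "x0^2 = x1^3 * x3" using eq True by simp
      then have "2*d = 3*a" using d2 pe x0n x3n m3 unfolding a_def by (simp add: prime_elem_multiplicity_mult_distrib prime_elem_multiplicity_power_distrib)
      then show ?thesis using b by simp
    next
      case False
      then have b: "b = multiplicity p x2" unfolding b_def vb_def by simp
      have XY: "multiplicity p (x1 * x2^3) = a + 3*b" using False pe x0n unfolding a_def b
        by (simp add: prime_elem_multiplicity_mult_distrib prime_elem_multiplicity_power_distrib)
      have Y3: "p ^ (3*a) dvd x1^3 * x3"
      proof -
        have "p ^ a dvd x1" unfolding a_def by (rule multiplicity_dvd)
        then have "(p^a)^3 dvd x1^3" by (rule dvd_power_same)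
        then show ?thesis by (simp add: power_mult[symmetric] mult.commute)
      qed
      have X3: "p ^ (a + 3*b) dvd x1 * x2^3"
      proof -
        have "p ^ a dvd x1" unfolding a_def by (rule multiplicity_dvd)
        moreover have "p ^ b dvd x2" unfolding b by (rule multiplicity_dvd)
        then have "(p^b)^3 dvd x2^3" by (rule dvd_power_same)
        ultimately show ?thesis by (simp add: power_add power_mult[symmetric] mult.commute mult_dvd_mono)
      qed
      show ?thesis
      proof (intro conjI impI)
        assume lt: "3*b < 2*a"
        have "Suc (a + 3*b) \<le> 3*a" using lt by simp
        then have "p ^ Suc (a + 3*b) dvd x1^3 * x3"
          using Y3 by (meson dvd_trans le_imp_power_dvd)
        then have "multiplicity p (x1 * x2^3 + x1^3 * x3) = a + 3*b"
          using mult_sum_eq[OF p _ XY] False x0n by simp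
        then show "2*d = a + 3*b" using d2 eq by simp
      next
        assume eqb: "3*b = 2*a"
        have "p ^ (3*a) dvd x1 * x2^3" using X3 eqb by simp
        then have "p ^ (3*a) dvd x0^2" using Y3 eq by simp
        then have "3*a \<le> multiplicity p (x0^2)" using x0n p by (intro multiplicity_geI) auto
        then show "3*a \<le> 2*d" using d2 by simp
      next
        assume gt: "2*a < 3*b"
        then have "0 < b" by simp
        then have "p dvd x2" using False p mult_pos_iff unfolding b by blast
        then have n3: "\<not> p dvd x3" using nd3[OF a] by blast
        then have x3n: "x3 \<noteq> 0" by auto
        have m3: "multiplicity p x3 = 0" using n3 by (simp add: not_dvd_imp_multiplicity_0)
        have XX: "multiplicity p (x1^3 * x3) = 3*a" using pe x0n x3n m3 unfolding a_def
          by (simp add: prime_elem_multiplicity_mult_distrib prime_elem_multiplicity_power_distrib)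
        have "Suc (3*a) \<le> a + 3*b" using gt by simp
        then have "p ^ Suc (3*a) dvd x1 * x2^3"
          using X3 by (meson dvd_trans le_imp_power_dvd)
        then have "multiplicity p (x1^3 * x3 + x1 * x2^3) = 3*a"
          using mult_sum_eq[OF p _ XX] x3n x0n by simp
        then show "2*d = 3*a" using d2 eq by (simp add: add.commute)
      qed
    qed
  qed
qed


lemma f_zero: "f1 0 b d = 0" "f2 0 b d = 0" "f3 0 b d = 0" "f4 0 b d = 0"
  "f5 0 b d = 0" "f6 0 b d = 0" "f7 0 b d = 0" "f8 0 b d = 0"
  using psi_arith(1)[of 0 b d] by simp_all

definition mkE :: "(nat \<Rightarrow> nat \<Rightarrow> nat \<Rightarrow> nat) \<Rightarrow> int \<Rightarrow> int \<Rightarrow> int \<Rightarrow> int" where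
  "mkE f x0 x1 x2 = (\<Prod>q\<in>prime_factors x1. q ^ f (multiplicity q x1) (vb x1 x2 q) (multiplicity q x0))"

lemma mkE_pos: "mkE f x0 x1 x2 > 0"
  unfolding mkE_def by (intro prod_pos) (auto simp: in_prime_factors_iff prime_gt_0_int)

lemma mkE_mult:
  assumes x1: "x1 \<noteq> 0" and f0: "\<And>b d. f 0 b d = 0" and p: "prime p"
  shows "multiplicity p (mkE f x0 x1 x2) = f (multiplicity p x1) (vb x1 x2 p) (multiplicity p x0)"
proof -
  let ?k = "\<lambda>q. f (multiplicity q x1) (vb x1 x2 q) (multiplicity q x0)"
  have "multiplicity p (mkE f x0 x1 x2) = (\<Sum>q\<in>prime_factors x1. multiplicity p (q ^ ?k q))"
    unfolding mkE_def using p
    by (intro prime_elem_multiplicity_prod_distrib) (auto simp: in_prime_factors_iff)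
  also have "\<dots> = (\<Sum>q\<in>prime_factors x1. if q = p then ?k q else 0)"
    using p by (intro sum.cong refl) (auto simp: in_prime_factors_iff multiplicity_distinct_prime_power)
  also have "\<dots> = (if p \<in> prime_factors x1 then ?k p else 0)"
    by (simp add: sum.delta')
  also have "\<dots> = ?k p"
  proof (cases "p \<in> prime_factors x1")
    case False
    then have "multiplicity p x1 = 0" using p by (auto simp: prime_factors_multiplicity)
    then show ?thesis using False f0 by simp
  qed simp
  finally show ?thesis .
qed

lemma mult_prod8:
  fixes p e1 e2 e3 e4 e5 e6 e7 e8 :: int
  assumes p: "prime p" and nz: "e1 \<noteq> 0" "e2 \<noteq> 0" "e3 \<noteq> 0" "e4 \<noteq> 0" "e5 \<noteq> 0" "e6 \<noteq> 0" "e7 \<noteq> 0" "e8 \<noteq> 0"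
  shows "multiplicity p (e1^k1 * e2^k2 * e3^k3 * e4^k4 * e5^k5 * e6^k6 * e7^k7 * e8^k8) =
    k1 * multiplicity p e1 + k2 * multiplicity p e2 + k3 * multiplicity p e3 + k4 * multiplicity p e4 +
    k5 * multiplicity p e5 + k6 * multiplicity p e6 + k7 * multiplicity p e7 + k8 * multiplicity p e8"
proof -
  have pe: "prime_elem p" using p by (rule prime_imp_prime_elem)
  show ?thesis using nz by (simp add: prime_elem_multiplicity_mult_distrib[OF pe] prime_elem_multiplicity_power_distrib[OF pe])
qed

lemma torsor_identity:
  fixes e1 e2 e3 e4 e5 e6 e7 e8 a1 a2 a3 :: int
  shows "(e1^3*e2^6*e3^9*e4^7*e5^5*e6^3*e7^5*e8*a2)^2
     - (e1^2*e2^4*e3^6*e4^5*e5^4*e6^3*e7^3*e8^2) * (-(e1^2*e2^3*e3^4*e4^3*e5^2*e6*e7^2*a1))^3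
     - (e1^2*e2^4*e3^6*e4^5*e5^4*e6^3*e7^3*e8^2)^3 * (-a3)
   = (e1^6*e2^12*e3^18*e4^14*e5^10*e6^6*e7^9*e8^2) *
     (e1^2 * e2 * a1^3 + e7 * a2^2 + e4 * e5^2 * e6^3 * e8^4 * a3)"
  by algebra


lemma mult_neg: "multiplicity p (- x :: int) = multiplicity p x"
proof -
  have "multiplicity p ((-1) * x) = multiplicity p x" by (rule multiplicity_times_unit_right) simp
  then show ?thesis by simp
qed

definition Phi :: "int \<times> int \<times> int \<times> int \<times> int \<times> int \<times> int \<times> int \<times> int \<times> int \<times> int \<Rightarrow> int \<times> int \<times> int \<times> int" where
  "Phi = (\<lambda>(e1,e2,e3,e4,e5,e6,e7,e8,a1,a2,a3).
     (e1^3*e2^6*e3^9*e4^7*e5^5*e6^3*e7^5*e8*a2, e1^2*e2^4*e3^6*e4^5*e5^4*e6^3*e7^3*e8^2,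
      -(e1^2*e2^3*e3^4*e4^3*e5^2*e6*e7^2*a1), -a3))"

definition Splus :: "real \<Rightarrow> (int \<times> int \<times> int \<times> int) set" where
  "Splus B = {(x0,x1,x2,x3). (x0,x1,x2,x3) \<in> NU_set B \<and> x1 > 0 \<and> x0 > 0}"

lemma psi_prime:
  fixes x0 x1 x2 x3 :: int
  assumes eq: "x0^2 = x1 * x2^3 + x1^3 * x3" and x1: "x1 > 0" and x0: "x0 > 0"
    and g: "gcd x1 (gcd x2 x3) = 1" and p: "prime p"
  defines "e1 \<equiv> mkE f1 x0 x1 x2" and "e2 \<equiv> mkE f2 x0 x1 x2" and "e3 \<equiv> mkE f3 x0 x1 x2"
    and "e4 \<equiv> mkE f4 x0 x1 x2" and "e5 \<equiv> mkE f5 x0 x1 x2" and "e6 \<equiv> mkE f6 x0 x1 x2"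
    and "e7 \<equiv> mkE f7 x0 x1 x2" and "e8 \<equiv> mkE f8 x0 x1 x2"
  shows "multiplicity p x1 = 2 * multiplicity p e1 + 4 * multiplicity p e2 + 6 * multiplicity p e3 + 5 * multiplicity p e4 + 4 * multiplicity p e5 + 3 * multiplicity p e6 + 3 * multiplicity p e7 + 2 * multiplicity p e8"
    and "\<exists>A1. vb x1 x2 p = 2 * multiplicity p e1 + 3 * multiplicity p e2 + 4 * multiplicity p e3 + 3 * multiplicity p e4 + 2 * multiplicity p e5 + multiplicity p e6 + 2 * multiplicity p e7 + A1 \<and> (A1 = 0 \<or> (multiplicity p e2 = 0 \<and> multiplicity p e3 = 0 \<and> multiplicity p e4 = 0 \<and> multiplicity p e5 = 0 \<and> multiplicity p e6 = 0 \<and> multiplicity p e7 = 0 \<and> multiplicity p e8 = 0))"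
    and "\<exists>A2. multiplicity p x0 = 3 * multiplicity p e1 + 6 * multiplicity p e2 + 9 * multiplicity p e3 + 7 * multiplicity p e4 + 5 * multiplicity p e5 + 3 * multiplicity p e6 + 5 * multiplicity p e7 + multiplicity p e8 + A2 \<and> (A2 = 0 \<or> (multiplicity p e1 = 0 \<and> multiplicity p e2 = 0 \<and> multiplicity p e3 = 0 \<and> multiplicity p e4 = 0 \<and> multiplicity p e5 = 0 \<and> multiplicity p e6 = 0 \<and> multiplicity p e8 = 0))"
    and "Pc (multiplicity p e1) (multiplicity p e2) (multiplicity p e3) (multiplicity p e4) (multiplicity p e5) (multiplicity p e6) (multiplicity p e7) (multiplicity p e8) 0 0"
    and "0 < multiplicity p x1 \<Longrightarrow> p dvd x3 \<Longrightarrow> multiplicity p e1 = 0 \<and> multiplicity p e2 = 0 \<and> multiplicity p e3 = 0 \<and> multiplicity p e4 = 0 \<and> multiplicity p e5 = 0 \<and> multiplicity p e6 = 0 \<and> multiplicity p e7 = 0"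
proof -
  note C = val_constraint[OF eq x1 x0 g p]
  have x1n: "x1 \<noteq> 0" using x1 by simp
  have Fm: "multiplicity p e1 = f1 (multiplicity p x1) (vb x1 x2 p) (multiplicity p x0)"
    "multiplicity p e2 = f2 (multiplicity p x1) (vb x1 x2 p) (multiplicity p x0)"
    "multiplicity p e3 = f3 (multiplicity p x1) (vb x1 x2 p) (multiplicity p x0)"
    "multiplicity p e4 = f4 (multiplicity p x1) (vb x1 x2 p) (multiplicity p x0)"
    "multiplicity p e5 = f5 (multiplicity p x1) (vb x1 x2 p) (multiplicity p x0)"
    "multiplicity p e6 = f6 (multiplicity p x1) (vb x1 x2 p) (multiplicity p x0)"
    "multiplicity p e7 = f7 (multiplicity p x1) (vb x1 x2 p) (multiplicity p x0)"
    "multiplicity p e8 = f8 (multiplicity p x1) (vb x1 x2 p) (multiplicity p x0)"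
    unfolding e1_def e2_def e3_def e4_def e5_def e6_def e7_def e8_def
    by (intro mkE_mult[OF x1n _ p] f_zero)+
  note PA = psi_arith[OF C(1), folded Fm]
  show "multiplicity p x1 = 2 * multiplicity p e1 + 4 * multiplicity p e2 + 6 * multiplicity p e3 + 5 * multiplicity p e4 + 4 * multiplicity p e5 + 3 * multiplicity p e6 + 3 * multiplicity p e7 + 2 * multiplicity p e8" by (rule PA(1))
  show "\<exists>A1. vb x1 x2 p = 2 * multiplicity p e1 + 3 * multiplicity p e2 + 4 * multiplicity p e3 + 3 * multiplicity p e4 + 2 * multiplicity p e5 + multiplicity p e6 + 2 * multiplicity p e7 + A1 \<and> (A1 = 0 \<or> (multiplicity p e2 = 0 \<and> multiplicity p e3 = 0 \<and> multiplicity p e4 = 0 \<and> multiplicity p e5 = 0 \<and> multiplicity p e6 = 0 \<and> multiplicity p e7 = 0 \<and> multiplicity p e8 = 0))" by (rule PA(2))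
  show "\<exists>A2. multiplicity p x0 = 3 * multiplicity p e1 + 6 * multiplicity p e2 + 9 * multiplicity p e3 + 7 * multiplicity p e4 + 5 * multiplicity p e5 + 3 * multiplicity p e6 + 5 * multiplicity p e7 + multiplicity p e8 + A2 \<and> (A2 = 0 \<or> (multiplicity p e1 = 0 \<and> multiplicity p e2 = 0 \<and> multiplicity p e3 = 0 \<and> multiplicity p e4 = 0 \<and> multiplicity p e5 = 0 \<and> multiplicity p e6 = 0 \<and> multiplicity p e8 = 0))" by (rule PA(3))
  show "Pc (multiplicity p e1) (multiplicity p e2) (multiplicity p e3) (multiplicity p e4) (multiplicity p e5) (multiplicity p e6) (multiplicity p e7) (multiplicity p e8) 0 0" by (rule PA(4))
  show "0 < multiplicity p x1 \<Longrightarrow> p dvd x3 \<Longrightarrow> multiplicity p e1 = 0 \<and> multiplicity p e2 = 0 \<and> multiplicity p e3 = 0 \<and> multiplicity p e4 = 0 \<and> multiplicity p e5 = 0 \<and> multiplicity p e6 = 0 \<and> multiplicity p e7 = 0" by (rule PA(5)[OF C(2)])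
qed


lemma psi_surj:
  assumes xin: "(x0,x1,x2,x3) \<in> Splus B"
  shows "\<exists>t \<in> N_set B. Phi t = (x0,x1,x2,x3)"
proof -
  from xin have eq: "x0^2 = x1 * x2^3 + x1^3 * x3" and x1: "x1 > 0" and x0: "x0 > 0"
    and g: "gcd x1 (gcd x2 x3) = 1" and bd: "real_of_int \<bar>x1\<bar> \<le> B" "real_of_int \<bar>x2\<bar> \<le> B"
    "real_of_int \<bar>x3\<bar> \<le> B" "real_of_int \<bar>x0\<bar> \<le> B^2"
    unfolding Splus_def NU_set_def by auto
  define e1 where "e1 = mkE f1 x0 x1 x2"
  define e2 where "e2 = mkE f2 x0 x1 x2"
  define e3 where "e3 = mkE f3 x0 x1 x2"
  define e4 where "e4 = mkE f4 x0 x1 x2"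
  define e5 where "e5 = mkE f5 x0 x1 x2"
  define e6 where "e6 = mkE f6 x0 x1 x2"
  define e7 where "e7 = mkE f7 x0 x1 x2"
  define e8 where "e8 = mkE f8 x0 x1 x2"
  have pos: "e1 > 0" "e2 > 0" "e3 > 0" "e4 > 0" "e5 > 0" "e6 > 0" "e7 > 0" "e8 > 0"
    unfolding e1_def e2_def e3_def e4_def e5_def e6_def e7_def e8_def by (rule mkE_pos)+
  then have nz: "e1 \<noteq> 0" "e2 \<noteq> 0" "e3 \<noteq> 0" "e4 \<noteq> 0" "e5 \<noteq> 0" "e6 \<noteq> 0" "e7 \<noteq> 0" "e8 \<noteq> 0" by auto
  note PP = psi_prime[OF eq x1 x0 g, folded e1_def e2_def e3_def e4_def e5_def e6_def e7_def e8_def]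
  have DV: "p dvd e1 \<longleftrightarrow> 0 < multiplicity p e1" "p dvd e2 \<longleftrightarrow> 0 < multiplicity p e2"
    "p dvd e3 \<longleftrightarrow> 0 < multiplicity p e3" "p dvd e4 \<longleftrightarrow> 0 < multiplicity p e4"
    "p dvd e5 \<longleftrightarrow> 0 < multiplicity p e5" "p dvd e6 \<longleftrightarrow> 0 < multiplicity p e6"
    "p dvd e7 \<longleftrightarrow> 0 < multiplicity p e7" "p dvd e8 \<longleftrightarrow> 0 < multiplicity p e8" if p: "prime p" for p
    using mult_pos_iff[OF p] nz by blast+
  define H where "H = e1^2*e2^4*e3^6*e4^5*e5^4*e6^3*e7^3*e8^2"
  define G where "G = e1^2*e2^3*e3^4*e4^3*e5^2*e6^1*e7^2*e8^0"
  define P where "P = e1^3*e2^6*e3^9*e4^7*e5^5*e6^3*e7^5*e8^1"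
  have Hm: "multiplicity p H = 2 * multiplicity p e1 + 4 * multiplicity p e2 + 6 * multiplicity p e3 + 5 * multiplicity p e4 + 4 * multiplicity p e5 + 3 * multiplicity p e6 + 3 * multiplicity p e7 + 2 * multiplicity p e8" if p: "prime p" for p
    unfolding H_def using mult_prod8[OF p nz(1) nz(2) nz(3) nz(4) nz(5) nz(6) nz(7) nz(8), of 2 4 6 5 4 3 3 2] by simp
  have Gm: "multiplicity p G = 2 * multiplicity p e1 + 3 * multiplicity p e2 + 4 * multiplicity p e3 + 3 * multiplicity p e4 + 2 * multiplicity p e5 + multiplicity p e6 + 2 * multiplicity p e7" if p: "prime p" for p
    unfolding G_def using mult_prod8[OF p nz(1) nz(2) nz(3) nz(4) nz(5) nz(6) nz(7) nz(8), of 2 3 4 3 2 1 2 0] by simp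
  have Pm: "multiplicity p P = 3 * multiplicity p e1 + 6 * multiplicity p e2 + 9 * multiplicity p e3 + 7 * multiplicity p e4 + 5 * multiplicity p e5 + 3 * multiplicity p e6 + 5 * multiplicity p e7 + multiplicity p e8" if p: "prime p" for p
    unfolding P_def using mult_prod8[OF p nz(1) nz(2) nz(3) nz(4) nz(5) nz(6) nz(7) nz(8), of 3 6 9 7 5 3 5 1] by simp
  have Hp: "H > 0" "G > 0" "P > 0" unfolding H_def G_def P_def using pos by simp_all
  have x1H: "x1 = H"
  proof -
    have "normalize x1 = normalize H"
      by (rule multiplicity_eq_imp_eq) (use x1 Hp PP(1) Hm in auto)
    then show ?thesis using x1 Hp by simp
  qed
  have Gd: "G dvd x2"
  proof (cases "x2 = 0")
    case False
    show ?thesis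
    proof (rule multiplicity_le_imp_dvd)
      show "G \<noteq> 0" using Hp by simp
      fix p :: int assume p: "prime p"
      obtain A1 where "vb x1 x2 p = 2 * multiplicity p e1 + 3 * multiplicity p e2 + 4 * multiplicity p e3 + 3 * multiplicity p e4 + 2 * multiplicity p e5 + multiplicity p e6 + 2 * multiplicity p e7 + A1" using PP(2)[OF p] by blast
      then show "multiplicity p G \<le> multiplicity p x2" using False Gm[OF p] by (simp add: vb_def)
    qed
  qed simp
  have Pd: "P dvd x0"
  proof (rule multiplicity_le_imp_dvd)
    show "P \<noteq> 0" using Hp by simp
    fix p :: int assume p: "prime p"
    obtain A2 where "multiplicity p x0 = 3 * multiplicity p e1 + 6 * multiplicity p e2 + 9 * multiplicity p e3 + 7 * multiplicity p e4 + 5 * multiplicity p e5 + 3 * multiplicity p e6 + 5 * multiplicity p e7 + multiplicity p e8 + A2" using PP(3)[OF p] by blast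
    then show "multiplicity p P \<le> multiplicity p x0" using Pm[OF p] by simp
  qed
  define a1 where "a1 = -(x2 div G)"
  define a2 where "a2 = x0 div P"
  define a3 where "a3 = -x3"
  have x2e: "x2 = -(G*a1)" using Gd unfolding a1_def by simp
  have x0e: "x0 = P*a2" using Pd unfolding a2_def by simp
  have a2p: "a2 \<ge> 1" using x0 x0e Hp(3) by (metis int_one_le_iff_zero_less zero_less_mult_pos)
  have a2n: "a2 \<noteq> 0" using a2p by simp
  have pe: "prime_elem p" if "prime p" for p :: int using that by (rule prime_imp_prime_elem)
  have EQ: "e1^2 * e2 * a1^3 + e7 * a2^2 + e4 * e5^2 * e6^3 * e8^4 * a3 = 0"
  proof -
    have K: "e1^6*e2^12*e3^18*e4^14*e5^10*e6^6*e7^9*e8^2 \<noteq> 0" using nz by simp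
    have "x0^2 - x1 * x2^3 - x1^3 * x3 = 0" using eq by simp
    then have "(e1^6*e2^12*e3^18*e4^14*e5^10*e6^6*e7^9*e8^2) *
     (e1^2 * e2 * a1^3 + e7 * a2^2 + e4 * e5^2 * e6^3 * e8^4 * a3) = 0"
      unfolding torsor_identity[symmetric] using x0e x1H x2e unfolding a3_def H_def G_def P_def by simp
    then show ?thesis using K by simp
  qed
  have G1: "gcd a1 (e2*e3*e4*e5*e6*e7*e8) = 1"
  proof (rule gcd_one_primes)
    fix p :: int assume p: "prime p" and d1: "p dvd a1" and d2: "p dvd e2*e3*e4*e5*e6*e7*e8"
    obtain A1 where A1: "vb x1 x2 p = 2 * multiplicity p e1 + 3 * multiplicity p e2 + 4 * multiplicity p e3 + 3 * multiplicity p e4 + 2 * multiplicity p e5 + multiplicity p e6 + 2 * multiplicity p e7 + A1" "A1 = 0 \<or> (multiplicity p e2 = 0 \<and> multiplicity p e3 = 0 \<and> multiplicity p e4 = 0 \<and> multiplicity p e5 = 0 \<and> multiplicity p e6 = 0 \<and> multiplicity p e7 = 0 \<and> multiplicity p e8 = 0)" using PP(2)[OF p] by blast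
    have "0 < A1"
    proof (cases "x2 = 0")
      case True
      then have "vb x1 x2 p = multiplicity p x1 + 1" by (simp add: vb_def)
      then show ?thesis using A1(1) PP(1)[OF p] by linarith
    next
      case False
      then have a1n: "a1 \<noteq> 0" using x2e by auto
      have "vb x1 x2 p = multiplicity p x2" using False by (simp add: vb_def)
      also have "\<dots> = multiplicity p G + multiplicity p a1" using x2e Hp a1n
        by (simp add: mult_neg prime_elem_multiplicity_mult_distrib[OF pe[OF p]])
      finally have "vb x1 x2 p = 2 * multiplicity p e1 + 3 * multiplicity p e2 + 4 * multiplicity p e3 + 3 * multiplicity p e4 + 2 * multiplicity p e5 + multiplicity p e6 + 2 * multiplicity p e7 + multiplicity p a1" using Gm[OF p] by simp
      moreover have "0 < multiplicity p a1" using d1 a1n mult_pos_iff[OF p] by blast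
      ultimately show ?thesis using A1(1) by linarith
    qed
    then have z: "multiplicity p e2 = 0 \<and> multiplicity p e3 = 0 \<and> multiplicity p e4 = 0 \<and> multiplicity p e5 = 0 \<and> multiplicity p e6 = 0 \<and> multiplicity p e7 = 0 \<and> multiplicity p e8 = 0" using A1(2) by simp
    from d2 have "p dvd e2 \<or> p dvd e3 \<or> p dvd e4 \<or> p dvd e5 \<or> p dvd e6 \<or> p dvd e7 \<or> p dvd e8" using p by (simp add: prime_dvd_mult_iff)
    then show False using z DV[OF p] by auto
  qed
  have G2: "gcd a2 (e1*e2*e3*e4*e5*e6*e8) = 1"
  proof (rule gcd_one_primes)
    fix p :: int assume p: "prime p" and d1: "p dvd a2" and d2: "p dvd e1*e2*e3*e4*e5*e6*e8"
    obtain A2 where A2: "multiplicity p x0 = 3 * multiplicity p e1 + 6 * multiplicity p e2 + 9 * multiplicity p e3 + 7 * multiplicity p e4 + 5 * multiplicity p e5 + 3 * multiplicity p e6 + 5 * multiplicity p e7 + multiplicity p e8 + A2" "A2 = 0 \<or> (multiplicity p e1 = 0 \<and> multiplicity p e2 = 0 \<and> multiplicity p e3 = 0 \<and> multiplicity p e4 = 0 \<and> multiplicity p e5 = 0 \<and> multiplicity p e6 = 0 \<and> multiplicity p e8 = 0)" using PP(3)[OF p] by blast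
    have "multiplicity p x0 = multiplicity p P + multiplicity p a2" using x0e Hp a2n
      by (simp add: prime_elem_multiplicity_mult_distrib[OF pe[OF p]])
    moreover have "0 < multiplicity p a2" using d1 a2n mult_pos_iff[OF p] by blast
    ultimately have "0 < A2" using A2(1) Pm[OF p] by linarith
    then have z: "multiplicity p e1 = 0 \<and> multiplicity p e2 = 0 \<and> multiplicity p e3 = 0 \<and> multiplicity p e4 = 0 \<and> multiplicity p e5 = 0 \<and> multiplicity p e6 = 0 \<and> multiplicity p e8 = 0" using A2(2) by simp
    from d2 have "p dvd e1 \<or> p dvd e2 \<or> p dvd e3 \<or> p dvd e4 \<or> p dvd e5 \<or> p dvd e6 \<or> p dvd e8" using p by (simp add: prime_dvd_mult_iff)
    then show False using z DV[OF p] by auto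
  qed
  have G3: "gcd a3 (e1*e2*e3*e4*e5*e6*e7) = 1"
  proof (rule gcd_one_primes)
    fix p :: int assume p: "prime p" and d1: "p dvd a3" and d2: "p dvd e1*e2*e3*e4*e5*e6*e7"
    from d2 have dd: "p dvd e1 \<or> p dvd e2 \<or> p dvd e3 \<or> p dvd e4 \<or> p dvd e5 \<or> p dvd e6 \<or> p dvd e7" using p by (simp add: prime_dvd_mult_iff)
    then have "0 < multiplicity p x1" using PP(1)[OF p] DV[OF p] by auto
    moreover have "p dvd x3" using d1 unfolding a3_def by simp
    ultimately have "multiplicity p e1 = 0 \<and> multiplicity p e2 = 0 \<and> multiplicity p e3 = 0 \<and> multiplicity p e4 = 0 \<and> multiplicity p e5 = 0 \<and> multiplicity p e6 = 0 \<and> multiplicity p e7 = 0" by (rule PP(5)[OF p])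
    then show False using dd DV[OF p] by auto
  qed
  have PC: "\<And>p. prime p \<Longrightarrow> Pc (multiplicity p e1) (multiplicity p e2) (multiplicity p e3) (multiplicity p e4) (multiplicity p e5) (multiplicity p e6) (multiplicity p e7) (multiplicity p e8) 0 0"
    by (rule PP(4))
  have H0: "gcd e8 (e1*e2*e3*e4*e5*e7) = 1"
  proof (rule gcd_one_primes)
    fix p :: int assume p: "prime p" and d1: "p dvd e8" and d2: "p dvd e1*e2*e3*e4*e5*e7"
    from d2 have "p dvd e1 \<or> p dvd e2 \<or> p dvd e3 \<or> p dvd e4 \<or> p dvd e5 \<or> p dvd e7" using p by (simp add: prime_dvd_mult_iff)
    then show False using d1 DV[OF p] PC[OF p] unfolding Pc_def by auto
  qed
  have H1: "gcd e7 (e1*e2*e4*e5*e6) = 1"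
  proof (rule gcd_one_primes)
    fix p :: int assume p: "prime p" and d1: "p dvd e7" and d2: "p dvd e1*e2*e4*e5*e6"
    from d2 have "p dvd e1 \<or> p dvd e2 \<or> p dvd e4 \<or> p dvd e5 \<or> p dvd e6" using p by (simp add: prime_dvd_mult_iff)
    then show False using d1 DV[OF p] PC[OF p] unfolding Pc_def by auto
  qed
  have H2: "gcd e6 (e1*e2*e3*e4) = 1"
  proof (rule gcd_one_primes)
    fix p :: int assume p: "prime p" and d1: "p dvd e6" and d2: "p dvd e1*e2*e3*e4"
    from d2 have "p dvd e1 \<or> p dvd e2 \<or> p dvd e3 \<or> p dvd e4" using p by (simp add: prime_dvd_mult_iff)
    then show False using d1 DV[OF p] PC[OF p] unfolding Pc_def by auto
  qed
  have H3: "gcd e5 (e1*e2*e3) = 1"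
  proof (rule gcd_one_primes)
    fix p :: int assume p: "prime p" and d1: "p dvd e5" and d2: "p dvd e1*e2*e3"
    from d2 have "p dvd e1 \<or> p dvd e2 \<or> p dvd e3" using p by (simp add: prime_dvd_mult_iff)
    then show False using d1 DV[OF p] PC[OF p] unfolding Pc_def by auto
  qed
  have H4: "gcd e4 (e1*e2) = 1"
  proof (rule gcd_one_primes)
    fix p :: int assume p: "prime p" and d1: "p dvd e4" and d2: "p dvd e1*e2"
    from d2 have "p dvd e1 \<or> p dvd e2" using p by (simp add: prime_dvd_mult_iff)
    then show False using d1 DV[OF p] PC[OF p] unfolding Pc_def by auto
  qed
  have H5: "gcd e3 e1 = 1"
  proof (rule gcd_one_primes)
    fix p :: int assume p: "prime p" and d1: "p dvd e3" and d2: "p dvd e1"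
    then show False using DV[OF p] PC[OF p] unfolding Pc_def by auto
  qed
  have tc: "torsor_cond B e1 e2 e3 e4 e5 e6 e7 e8 a1 a2 a3"
    unfolding torsor_cond_def
  proof (intro conjI)
    show "real_of_int (e1^2 * e2^4 * e3^6 * e4^5 * e5^4 * e6^3 * e7^3 * e8^2) \<le> B"
      using bd(1) x1 x1H unfolding H_def by simp
    show "real_of_int \<bar>e1^2 * e2^3 * e3^4 * e4^3 * e5^2 * e6 * e7^2 * a1\<bar> \<le> B"
      using bd(2) x2e unfolding G_def by simp
    show "real_of_int \<bar>a3\<bar> \<le> B" using bd(3) unfolding a3_def by simp
    show "real_of_int (e1^3 * e2^6 * e3^9 * e4^7 * e5^5 * e6^3 * e7^5 * e8 * a2) \<le> B^2"
      using bd(4) x0 x0e unfolding P_def by simp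
  qed (use EQ pos a2p G1 G2 G3 H0 H1 H2 H3 H4 H5 in \<open>simp_all add: mult.assoc\<close>)
  show ?thesis
  proof
    show "(e1,e2,e3,e4,e5,e6,e7,e8,a1,a2,a3) \<in> N_set B" using tc unfolding N_set_def by simp
    show "Phi (e1,e2,e3,e4,e5,e6,e7,e8,a1,a2,a3) = (x0,x1,x2,x3)"
      unfolding Phi_def using x0e x1H x2e unfolding a3_def H_def G_def P_def by simp
  qed
qed


lemma cop_helper:
  fixes X Y p :: int
  assumes "gcd X Y = 1" "prime p"
  shows "multiplicity p X = 0 \<or> \<not> p dvd Y"
  using prime_dvd_gcd_contra[OF assms] not_dvd_imp_multiplicity_0 by blast

lemma phi_mult:
  fixes e1 e2 e3 e4 e5 e6 e7 e8 a1 a2 a3 :: int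
  assumes tc: "torsor_cond B e1 e2 e3 e4 e5 e6 e7 e8 a1 a2 a3" and p: "prime p"
  defines "x0 \<equiv> e1^3*e2^6*e3^9*e4^7*e5^5*e6^3*e7^5*e8*a2"
    and "x1 \<equiv> e1^2*e2^4*e3^6*e4^5*e5^4*e6^3*e7^3*e8^2"
    and "x2 \<equiv> -(e1^2*e2^3*e3^4*e4^3*e5^2*e6*e7^2*a1)"
  shows "multiplicity p e1 = f1 (multiplicity p x1) (vb x1 x2 p) (multiplicity p x0) \<and>
    multiplicity p e2 = f2 (multiplicity p x1) (vb x1 x2 p) (multiplicity p x0) \<and>
    multiplicity p e3 = f3 (multiplicity p x1) (vb x1 x2 p) (multiplicity p x0) \<and>
    multiplicity p e4 = f4 (multiplicity p x1) (vb x1 x2 p) (multiplicity p x0) \<and>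
    multiplicity p e5 = f5 (multiplicity p x1) (vb x1 x2 p) (multiplicity p x0) \<and>
    multiplicity p e6 = f6 (multiplicity p x1) (vb x1 x2 p) (multiplicity p x0) \<and>
    multiplicity p e7 = f7 (multiplicity p x1) (vb x1 x2 p) (multiplicity p x0) \<and>
    multiplicity p e8 = f8 (multiplicity p x1) (vb x1 x2 p) (multiplicity p x0)"
proof -

  from tc have EQ: "e1^2 * e2 * a1^3 + e7 * a2^2 + e4 * e5^2 * e6^3 * e8^4 * a3 = 0"
    and pos: "e1 \<ge> 1" "e2 \<ge> 1" "e3 \<ge> 1" "e4 \<ge> 1" "e5 \<ge> 1" "e6 \<ge> 1" "e7 \<ge> 1" "e8 \<ge> 1"
    and a2p: "a2 \<ge> 1"
    and bd: "real_of_int (e1^2 * e2^4 * e3^6 * e4^5 * e5^4 * e6^3 * e7^3 * e8^2) \<le> B"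
      "real_of_int \<bar>e1^2 * e2^3 * e3^4 * e4^3 * e5^2 * e6 * e7^2 * a1\<bar> \<le> B"
      "real_of_int \<bar>a3\<bar> \<le> B"
      "real_of_int (e1^3 * e2^6 * e3^9 * e4^7 * e5^5 * e6^3 * e7^5 * e8 * a2) \<le> B^2"
    and g1: "gcd a1 (e2 * e3 * e4 * e5 * e6 * e7 * e8) = 1"
    and g2: "gcd a2 (e1 * e2 * e3 * e4 * e5 * e6 * e8) = 1"
    and g3: "gcd a3 (e1 * e2 * e3 * e4 * e5 * e6 * e7) = 1"
    and h8: "gcd e8 (e1 * e2 * e3 * e4 * e5 * e7) = 1"
    and h7: "gcd e7 (e1 * e2 * e4 * e5 * e6) = 1"
    and h6: "gcd e6 (e1 * e2 * e3 * e4) = 1"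
    and h5: "gcd e5 (e1 * e2 * e3) = 1"
    and h4: "gcd e4 (e1 * e2) = 1"
    and h3: "gcd e3 e1 = 1"
    unfolding torsor_cond_def by simp_all
  have nz: "e1 \<noteq> 0" "e2 \<noteq> 0" "e3 \<noteq> 0" "e4 \<noteq> 0" "e5 \<noteq> 0" "e6 \<noteq> 0" "e7 \<noteq> 0" "e8 \<noteq> 0"
    using pos by auto
  have a2n: "a2 \<noteq> 0" using a2p by simp

  have pe: "prime_elem p" using p by (rule prime_imp_prime_elem)
  have NDV: "\<not> p dvd e1 \<Longrightarrow> multiplicity p e1 = 0" "\<not> p dvd e2 \<Longrightarrow> multiplicity p e2 = 0"
    "\<not> p dvd e3 \<Longrightarrow> multiplicity p e3 = 0" "\<not> p dvd e4 \<Longrightarrow> multiplicity p e4 = 0"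
    "\<not> p dvd e5 \<Longrightarrow> multiplicity p e5 = 0" "\<not> p dvd e6 \<Longrightarrow> multiplicity p e6 = 0"
    "\<not> p dvd e7 \<Longrightarrow> multiplicity p e7 = 0" "\<not> p dvd e8 \<Longrightarrow> multiplicity p e8 = 0"
    by (simp_all add: not_dvd_imp_multiplicity_0)
  define A1 where "A1 = (if a1 = 0 then 1 else multiplicity p a1)"
  define A2 where "A2 = multiplicity p a2"
  have zA1: "A1 = 0 \<or> (multiplicity p e2 = 0 \<and> multiplicity p e3 = 0 \<and> multiplicity p e4 = 0 \<and> multiplicity p e5 = 0 \<and> multiplicity p e6 = 0 \<and> multiplicity p e7 = 0 \<and> multiplicity p e8 = 0)"
  proof (cases "a1 = 0")
    case True
    then have "\<not> p dvd e2*e3*e4*e5*e6*e7*e8" using g1 p by (metis gcd_0_left normalize_1_iff not_prime_unit normalize_idem dvd_normalize_iff is_unit_normalize)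
    then show ?thesis using NDV p by (simp add: prime_dvd_mult_iff)
  next
    case False
    then show ?thesis using cop_helper[OF g1 p] NDV p unfolding A1_def by (auto simp add: prime_dvd_mult_iff)
  qed
  have zA2: "A2 = 0 \<or> (multiplicity p e1 = 0 \<and> multiplicity p e2 = 0 \<and> multiplicity p e3 = 0 \<and> multiplicity p e4 = 0 \<and> multiplicity p e5 = 0 \<and> multiplicity p e6 = 0 \<and> multiplicity p e8 = 0)"
    using cop_helper[OF g2 p] NDV p unfolding A2_def by (auto simp add: prime_dvd_mult_iff)
  have P8: "multiplicity p e8 = 0 \<or> \<not> p dvd e1 * e2 * e3 * e4 * e5 * e7" by (rule cop_helper[OF h8 p])
  have P7: "multiplicity p e7 = 0 \<or> \<not> p dvd e1 * e2 * e4 * e5 * e6" by (rule cop_helper[OF h7 p])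
  have P6: "multiplicity p e6 = 0 \<or> \<not> p dvd e1 * e2 * e3 * e4" by (rule cop_helper[OF h6 p])
  have P5: "multiplicity p e5 = 0 \<or> \<not> p dvd e1 * e2 * e3" by (rule cop_helper[OF h5 p])
  have P4: "multiplicity p e4 = 0 \<or> \<not> p dvd e1 * e2" by (rule cop_helper[OF h4 p])
  have P3: "multiplicity p e3 = 0 \<or> \<not> p dvd e1" by (rule cop_helper[OF h3 p])
  have PC: "Pc (multiplicity p e1) (multiplicity p e2) (multiplicity p e3) (multiplicity p e4) (multiplicity p e5) (multiplicity p e6) (multiplicity p e7) (multiplicity p e8) A1 A2"
    unfolding Pc_def using zA1 zA2 P8 P7 P6 P5 P4 P3 NDV p by (auto simp add: prime_dvd_mult_iff)
  have m1: "multiplicity p x1 = 2*multiplicity p e1+4*multiplicity p e2+6*multiplicity p e3+5*multiplicity p e4+4*multiplicity p e5+3*multiplicity p e6+3*multiplicity p e7+2*multiplicity p e8"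
    unfolding x1_def using mult_prod8[OF p nz(1) nz(2) nz(3) nz(4) nz(5) nz(6) nz(7) nz(8), of 2 4 6 5 4 3 3 2] by simp
  have mG: "multiplicity p (e1^2*e2^3*e3^4*e4^3*e5^2*e6^1*e7^2*e8^0) = 2 * multiplicity p e1 + 3 * multiplicity p e2 + 4 * multiplicity p e3 + 3 * multiplicity p e4 + 2 * multiplicity p e5 + multiplicity p e6 + 2 * multiplicity p e7"
    using mult_prod8[OF p nz(1) nz(2) nz(3) nz(4) nz(5) nz(6) nz(7) nz(8), of 2 3 4 3 2 1 2 0] by simp
  have mP: "multiplicity p (e1^3*e2^6*e3^9*e4^7*e5^5*e6^3*e7^5*e8^1) = 3 * multiplicity p e1 + 6 * multiplicity p e2 + 9 * multiplicity p e3 + 7 * multiplicity p e4 + 5 * multiplicity p e5 + 3 * multiplicity p e6 + 5 * multiplicity p e7 + multiplicity p e8"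
    using mult_prod8[OF p nz(1) nz(2) nz(3) nz(4) nz(5) nz(6) nz(7) nz(8), of 3 6 9 7 5 3 5 1] by simp
  have m2: "vb x1 x2 p = 2*multiplicity p e1+3*multiplicity p e2+4*multiplicity p e3+3*multiplicity p e4+2*multiplicity p e5+multiplicity p e6+2*multiplicity p e7+A1"
  proof (cases "a1 = 0")
    case True
    then have "multiplicity p e2 = 0 \<and> multiplicity p e3 = 0 \<and> multiplicity p e4 = 0 \<and> multiplicity p e5 = 0 \<and> multiplicity p e6 = 0 \<and> multiplicity p e7 = 0 \<and> multiplicity p e8 = 0" using zA1 unfolding A1_def by simp
    then show ?thesis using True m1 unfolding vb_def x2_def A1_def by simp
  next
    case False
    then have "x2 \<noteq> 0" using nz unfolding x2_def by simp
    then have "vb x1 x2 p = multiplicity p (e1^2*e2^3*e3^4*e4^3*e5^2*e6^1*e7^2*e8^0 * a1)"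
      unfolding vb_def x2_def by (simp add: mult_neg)
    also have "\<dots> = 2 * multiplicity p e1 + 3 * multiplicity p e2 + 4 * multiplicity p e3 + 3 * multiplicity p e4 + 2 * multiplicity p e5 + multiplicity p e6 + 2 * multiplicity p e7 + multiplicity p a1"
      using False nz mG by (simp add: prime_elem_multiplicity_mult_distrib[OF pe] del: power_0 power_one_right)
    finally show ?thesis using False unfolding A1_def by simp
  qed
  have m0: "multiplicity p x0 = 3*multiplicity p e1+6*multiplicity p e2+9*multiplicity p e3+7*multiplicity p e4+5*multiplicity p e5+3*multiplicity p e6+5*multiplicity p e7+multiplicity p e8+A2"
  proof -
    have "multiplicity p x0 = multiplicity p (e1^3*e2^6*e3^9*e4^7*e5^5*e6^3*e7^5*e8^1 * a2)"
      unfolding x0_def by simp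
    also have "\<dots> = 3 * multiplicity p e1 + 6 * multiplicity p e2 + 9 * multiplicity p e3 + 7 * multiplicity p e4 + 5 * multiplicity p e5 + 3 * multiplicity p e6 + 5 * multiplicity p e7 + multiplicity p e8 + multiplicity p a2"
      using a2n nz mP by (simp add: prime_elem_multiplicity_mult_distrib[OF pe] del: power_one_right)
    finally show ?thesis unfolding A2_def by simp
  qed
  show ?thesis using phi_arith[OF PC] unfolding m1 m2 m0 by simp
qed

lemma phi_valid:
  fixes e1 e2 e3 e4 e5 e6 e7 e8 a1 a2 a3 :: int
  assumes tc: "torsor_cond B e1 e2 e3 e4 e5 e6 e7 e8 a1 a2 a3"
  shows "Phi (e1,e2,e3,e4,e5,e6,e7,e8,a1,a2,a3) \<in> Splus B"
proof -

  from tc have EQ: "e1^2 * e2 * a1^3 + e7 * a2^2 + e4 * e5^2 * e6^3 * e8^4 * a3 = 0"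
    and pos: "e1 \<ge> 1" "e2 \<ge> 1" "e3 \<ge> 1" "e4 \<ge> 1" "e5 \<ge> 1" "e6 \<ge> 1" "e7 \<ge> 1" "e8 \<ge> 1"
    and a2p: "a2 \<ge> 1"
    and bd: "real_of_int (e1^2 * e2^4 * e3^6 * e4^5 * e5^4 * e6^3 * e7^3 * e8^2) \<le> B"
      "real_of_int \<bar>e1^2 * e2^3 * e3^4 * e4^3 * e5^2 * e6 * e7^2 * a1\<bar> \<le> B"
      "real_of_int \<bar>a3\<bar> \<le> B"
      "real_of_int (e1^3 * e2^6 * e3^9 * e4^7 * e5^5 * e6^3 * e7^5 * e8 * a2) \<le> B^2"
    and g1: "gcd a1 (e2 * e3 * e4 * e5 * e6 * e7 * e8) = 1"
    and g2: "gcd a2 (e1 * e2 * e3 * e4 * e5 * e6 * e8) = 1"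
    and g3: "gcd a3 (e1 * e2 * e3 * e4 * e5 * e6 * e7) = 1"
    and h8: "gcd e8 (e1 * e2 * e3 * e4 * e5 * e7) = 1"
    and h7: "gcd e7 (e1 * e2 * e4 * e5 * e6) = 1"
    and h6: "gcd e6 (e1 * e2 * e3 * e4) = 1"
    and h5: "gcd e5 (e1 * e2 * e3) = 1"
    and h4: "gcd e4 (e1 * e2) = 1"
    and h3: "gcd e3 e1 = 1"
    unfolding torsor_cond_def by simp_all
  have nz: "e1 \<noteq> 0" "e2 \<noteq> 0" "e3 \<noteq> 0" "e4 \<noteq> 0" "e5 \<noteq> 0" "e6 \<noteq> 0" "e7 \<noteq> 0" "e8 \<noteq> 0"
    using pos by auto
  have a2n: "a2 \<noteq> 0" using a2p by simp

  define x0 where "x0 = e1^3*e2^6*e3^9*e4^7*e5^5*e6^3*e7^5*e8*a2"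
  define x1 where "x1 = e1^2*e2^4*e3^6*e4^5*e5^4*e6^3*e7^3*e8^2"
  define x2 where "x2 = -(e1^2*e2^3*e3^4*e4^3*e5^2*e6*e7^2*a1)"
  define x3 where "x3 = -a3"
  have ph: "Phi (e1,e2,e3,e4,e5,e6,e7,e8,a1,a2,a3) = (x0,x1,x2,x3)"
    unfolding Phi_def x0_def x1_def x2_def x3_def by simp
  have x1p: "x1 > 0" unfolding x1_def using pos by simp
  have x0p: "x0 > 0" unfolding x0_def using pos a2p by simp
  have eq: "x0^2 = x1 * x2^3 + x1^3 * x3"
  proof -
    have "x0^2 - x1 * x2^3 - x1^3 * x3 = 0"
      unfolding x0_def x1_def x2_def x3_def torsor_identity EQ by simp
    then show ?thesis by simp
  qed
  have g: "gcd x1 (gcd x2 x3) = 1"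
  proof (rule gcd_one_primes)
    fix p :: int assume p: "prime p" and d1: "p dvd x1" and d2: "p dvd gcd x2 x3"
    have d3: "p dvd a3" using d2 unfolding x3_def by (meson dvd_minus_iff dvd_trans gcd_dvd2)
    have d22: "p dvd e1^2*e2^3*e3^4*e4^3*e5^2*e6*e7^2*a1" using d2 unfolding x2_def by (meson dvd_minus_iff dvd_trans gcd_dvd1)
    have n7: "\<not> p dvd e1*e2*e3*e4*e5*e6*e7" using prime_dvd_gcd_contra[OF g3 p d3] by blast
    then have n7': "\<not> p dvd e1" "\<not> p dvd e2" "\<not> p dvd e3" "\<not> p dvd e4" "\<not> p dvd e5" "\<not> p dvd e6" "\<not> p dvd e7"
      using p by (simp_all add: prime_dvd_mult_iff)
    have "p dvd e8" using d1 n7' p unfolding x1_def by (simp add: prime_dvd_mult_iff prime_dvd_power_iff)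
    moreover have "p dvd a1" using d22 n7' p by (simp add: prime_dvd_mult_iff prime_dvd_power_iff)
    ultimately show False using prime_dvd_gcd_contra[OF g1 p] p by (simp add: prime_dvd_mult_iff)
  qed
  have b1: "real_of_int \<bar>x1\<bar> \<le> B" using bd(1) x1p unfolding x1_def by simp
  have b2: "real_of_int \<bar>x2\<bar> \<le> B" using bd(2) unfolding x2_def by (simp only: abs_minus_cancel)
  have b3: "real_of_int \<bar>x3\<bar> \<le> B" using bd(3) unfolding x3_def by (simp only: abs_minus_cancel)
  have b0: "real_of_int \<bar>x0\<bar> \<le> B^2" using bd(4) x0p unfolding x0_def by simp
  have "(x0,x1,x2,x3) \<in> Splus B"
    unfolding Splus_def NU_set_def using eq x1p x0p g b1 b2 b3 b0 by simp
  then show ?thesis using ph by simp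
qed

lemma phi_inj: "inj_on Phi (N_set B)"
proof (rule inj_onI)
  fix t t' assume tin: "t \<in> N_set B" and t'in: "t' \<in> N_set B" and ph: "Phi t = Phi t'"
  obtain e1 e2 e3 e4 e5 e6 e7 e8 a1 a2 a3 where t: "t = (e1,e2,e3,e4,e5,e6,e7,e8,a1,a2,a3)"
    by (cases t) auto
  obtain d1 d2 d3 d4 d5 d6 d7 d8 b1 b2 b3 where t': "t' = (d1,d2,d3,d4,d5,d6,d7,d8,b1,b2,b3)"
    by (cases t') auto
  have tc: "torsor_cond B e1 e2 e3 e4 e5 e6 e7 e8 a1 a2 a3" using tin t unfolding N_set_def by simp
  have tc': "torsor_cond B d1 d2 d3 d4 d5 d6 d7 d8 b1 b2 b3" using t'in t' unfolding N_set_def by simp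
  have pos: "e1 \<ge> 1" "e2 \<ge> 1" "e3 \<ge> 1" "e4 \<ge> 1" "e5 \<ge> 1" "e6 \<ge> 1" "e7 \<ge> 1" "e8 \<ge> 1" "a2 \<ge> 1"
    using tc unfolding torsor_cond_def by simp_all
  have pos': "d1 \<ge> 1" "d2 \<ge> 1" "d3 \<ge> 1" "d4 \<ge> 1" "d5 \<ge> 1" "d6 \<ge> 1" "d7 \<ge> 1" "d8 \<ge> 1" "b2 \<ge> 1"
    using tc' unfolding torsor_cond_def by simp_all
  have X: "e1^3*e2^6*e3^9*e4^7*e5^5*e6^3*e7^5*e8*a2 = d1^3*d2^6*d3^9*d4^7*d5^5*d6^3*d7^5*d8*b2"
    "e1^2*e2^4*e3^6*e4^5*e5^4*e6^3*e7^3*e8^2 = d1^2*d2^4*d3^6*d4^5*d5^4*d6^3*d7^3*d8^2"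
    "e1^2*e2^3*e3^4*e4^3*e5^2*e6*e7^2*a1 = d1^2*d2^3*d3^4*d4^3*d5^2*d6*d7^2*b1"
    "a3 = b3"
    using ph unfolding t t' Phi_def by simp_all
  have M: "multiplicity p e1 = multiplicity p d1 \<and> multiplicity p e2 = multiplicity p d2 \<and>
      multiplicity p e3 = multiplicity p d3 \<and> multiplicity p e4 = multiplicity p d4 \<and>
      multiplicity p e5 = multiplicity p d5 \<and> multiplicity p e6 = multiplicity p d6 \<and>
      multiplicity p e7 = multiplicity p d7 \<and> multiplicity p e8 = multiplicity p d8" if p: "prime p" for p
    using phi_mult[OF tc p] phi_mult[OF tc' p] unfolding X by simp
  have eqs: "e1 = d1" "e2 = d2" "e3 = d3" "e4 = d4" "e5 = d5" "e6 = d6" "e7 = d7" "e8 = d8"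
  proof -
    have EQ: "normalize x = normalize y \<Longrightarrow> x > 0 \<Longrightarrow> y > 0 \<Longrightarrow> x = y" for x y :: int by simp
    show "e1 = d1" by (rule EQ[OF multiplicity_eq_imp_eq]) (use pos pos' M in auto)
    show "e2 = d2" by (rule EQ[OF multiplicity_eq_imp_eq]) (use pos pos' M in auto)
    show "e3 = d3" by (rule EQ[OF multiplicity_eq_imp_eq]) (use pos pos' M in auto)
    show "e4 = d4" by (rule EQ[OF multiplicity_eq_imp_eq]) (use pos pos' M in auto)
    show "e5 = d5" by (rule EQ[OF multiplicity_eq_imp_eq]) (use pos pos' M in auto)
    show "e6 = d6" by (rule EQ[OF multiplicity_eq_imp_eq]) (use pos pos' M in auto)
    show "e7 = d7" by (rule EQ[OF multiplicity_eq_imp_eq]) (use pos pos' M in auto)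
    show "e8 = d8" by (rule EQ[OF multiplicity_eq_imp_eq]) (use pos pos' M in auto)
  qed
  have nzP: "e1^3*e2^6*e3^9*e4^7*e5^5*e6^3*e7^5*e8 \<noteq> 0" "e1^2*e2^3*e3^4*e4^3*e5^2*e6*e7^2 \<noteq> 0"
    using pos by auto
  have "a2 = b2" using X(1) nzP(1) unfolding eqs by (simp add: mult.assoc[symmetric])
  moreover have "a1 = b1" using X(3) nzP(2) unfolding eqs by (simp add: mult.assoc[symmetric])
  ultimately show "t = t'" unfolding t t' using eqs X(4) by simp
qed


lemma cube_split:
  fixes a b c :: int
  assumes a: "a > 0" and g: "gcd a b = 1" and e: "c^3 = a^2 * b"
  shows "\<exists>u w. a = u^3 \<and> b = w^3"
proof (cases "b = 0")
  case True
  then have "a = 1" using g a by simp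
  then show ?thesis using True by (intro exI[of _ 1] exI[of _ 0]) simp
next
  case False
  define A where "A = nat a"
  define Bn where "Bn = nat \<bar>b\<bar>"
  define Cn where "Cn = nat \<bar>c\<bar>"
  have iA: "int A = a" using a unfolding A_def by simp
  have iB: "int Bn = \<bar>b\<bar>" unfolding Bn_def by simp
  have iC: "int Cn = \<bar>c\<bar>" unfolding Cn_def by simp
  have "\<bar>c\<bar>^3 = a^2 * \<bar>b\<bar>" using arg_cong[OF e, of abs] a by (simp add: abs_mult power_abs)
  then have "int (Cn^3) = int (A^2 * Bn)" using iA iB iC by simp
  then have cube: "Cn^3 = A^2 * Bn" by (simp only: of_nat_eq_iff)
  have "int (gcd A Bn) = gcd a \<bar>b\<bar>" using iA iB gcd_int_int_eq[of A Bn] by simp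
  also have "\<dots> = 1" using g by simp
  finally have "coprime A Bn" by (simp add: coprime_iff_gcd_eq_1)
  then have cop: "coprime (A^2) Bn" by simp
  have Ap: "A > 0" "Bn > 0" using a False unfolding A_def Bn_def by auto
  have "is_nth_power 3 (A^2 * Bn)" unfolding cube[symmetric] by simp
  then have np: "is_nth_power 3 (A^2)" "is_nth_power 3 Bn"
    using is_nth_power_mult_coprime_natD[OF cop] Ap by simp_all
  have "is_nth_power 3 A"
    unfolding is_nth_power_conv_multiplicity_nat[of 3, simplified]
  proof (intro allI impI)
    fix p :: nat assume p: "prime p"
    have "3 dvd multiplicity p (A^2)" using np(1) p unfolding is_nth_power_conv_multiplicity_nat[of 3, simplified] by blast
    then have "3 dvd 2 * multiplicity p A" using p Ap by (simp add: prime_elem_multiplicity_power_distrib)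
    then show "3 dvd multiplicity p A" by presburger
  qed
  then obtain u where u: "A = u^3" by (auto elim: is_nth_powerE)
  obtain w where w: "Bn = w^3" using np(2) by (auto elim: is_nth_powerE)
  have "a = (int u)^3" using iA u by simp
  moreover have "b = (if b > 0 then int w else - int w)^3" using iB w False by (auto simp: abs_if)
  ultimately show ?thesis by blast
qed

lemma cube_root_bound:
  fixes y B :: real
  assumes y: "y \<ge> 0" and h: "y^3 \<le> B"
  shows "y \<le> B powr (1/3)"
proof -
  have "(y^3) powr (1/3) = (y powr 3) powr (1/3)" using y by simp
  also have "\<dots> = y" using y by (simp add: powr_powr del: powr_numeral)
  finally have "y = (y^3) powr (1/3)" by simp
  also have "\<dots> \<le> B powr (1/3)" using y h by (intro powr_mono2) auto
  finally show ?thesis .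
qed


lemma cube_inj:
  fixes x y :: int
  assumes "x^3 = y^3"
  shows "x = y"
proof -
  have "\<bar>x\<bar>^3 = \<bar>y\<bar>^3" using assms by (metis power_abs)
  then have "\<bar>x\<bar> = \<bar>y\<bar>" by (rule power_eq_imp_eq_base) auto
  then have "x = y \<or> x = - y" by (metis abs_eq_iff)
  then show ?thesis
  proof
    assume "x = - y"
    then have "x^3 = - (x^3)" using assms by simp
    then have "x = 0" by simp
    then show ?thesis using \<open>x = - y\<close> by simp
  qed
qed

definition Zplus :: "real \<Rightarrow> (int \<times> int \<times> int \<times> int) set" where
  "Zplus B = {(x0,x1,x2,x3). (x0,x1,x2,x3) \<in> NU_set B \<and> x1 > 0 \<and> x0 = 0}"

lemma Zplus_sub:
  fixes B :: real
  defines "K \<equiv> \<lfloor>B powr (1/3)\<rfloor>"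
  shows "Zplus B \<subseteq> (\<lambda>(u,w). (0::int, u^3, -(u^2*w), w^3)) ` ({-K..K} \<times> {-K..K})"
proof
  fix x assume xin: "x \<in> Zplus B"
  obtain x0 x1 x2 x3 where x: "x = (x0,x1,x2,x3)" by (cases x) auto
  from xin have eq: "x0^2 = x1 * x2^3 + x1^3 * x3" and x1: "x1 > 0" and x0: "x0 = 0"
    and g: "gcd x1 (gcd x2 x3) = 1" and bd: "real_of_int \<bar>x1\<bar> \<le> B" "real_of_int \<bar>x3\<bar> \<le> B"
    unfolding x Zplus_def NU_set_def by auto
  have e: "x2^3 = x1^2 * (-x3)"
  proof -
    have "x1 * (x2^3 + x1^2 * x3) = 0" using eq x0 by (simp add: algebra_simps power2_eq_square power3_eq_cube)
    then have "x2^3 + x1^2 * x3 = 0" using x1 by simp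
    then show ?thesis by simp
  qed
  have g2: "gcd x1 (-x3) = 1"
  proof (rule gcd_one_primes)
    fix p :: int assume p: "prime p" and d1: "p dvd x1" and d3: "p dvd -x3"
    have "p dvd x2^3" unfolding e using d3 by simp
    then have "p dvd x2" using p prime_dvd_power by blast
    then show False using prime_dvd_gcd_contra[OF g p d1] d3 by simp
  qed
  obtain u w where uw: "x1 = u^3" "-x3 = w^3" using cube_split[OF x1 g2 e] by blast
  have x2e: "x2 = -(u^2 * (-w))"
  proof -
    have "x2^3 = (u^2 * w)^3" using e uw by (simp add: power_mult_distrib power_mult[symmetric] mult.commute)
    then show ?thesis using cube_inj by simp
  qed
  have x3e: "x3 = (-w)^3" using uw by simp
  have "real_of_int \<bar>u\<bar> \<le> B powr (1/3)"
    by (rule cube_root_bound) (use bd(1) uw in \<open>simp_all add: power_abs\<close>)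
  then have ub: "\<bar>u\<bar> \<le> K" unfolding K_def by (simp add: le_floor_iff)
  have "real_of_int \<bar>-w\<bar> \<le> B powr (1/3)"
    by (rule cube_root_bound) (use bd(2) x3e in \<open>simp_all add: power_abs\<close>)
  then have wb: "\<bar>-w\<bar> \<le> K" unfolding K_def by (simp only: le_floor_iff)
  show "x \<in> (\<lambda>(u,w). (0::int, u^3, -(u^2*w), w^3)) ` ({-K..K} \<times> {-K..K})"
    using ub wb unfolding x x0 uw(1) x2e x3e
    by (intro image_eqI[of _ _ "(u, -w)"]) auto
qed

lemma Zplus_card:
  fixes B :: real
  assumes B: "B \<ge> 1"
  shows "real (card (Zplus B)) \<le> 9 * B powr (2/3)"
proof -
  define K where "K = \<lfloor>B powr (1/3)\<rfloor>"
  have r1: "1 \<le> B powr (1/3)" using B by (intro ge_one_powr_ge_zero) auto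
  have K0: "K \<ge> 0" unfolding K_def using r1 by simp
  have "card (Zplus B) \<le> card ((\<lambda>(u,w). (0::int, u^3, -(u^2*w), w^3)) ` ({-K..K} \<times> {-K..K}))"
    by (rule card_mono) (use Zplus_sub[of B] in \<open>simp_all add: K_def\<close>)
  also have "\<dots> \<le> card ({-K..K} \<times> {-K..K})" by (rule card_image_le) simp
  also have "\<dots> = nat (2*K+1) * nat (2*K+1)" by (simp add: card_cartesian_product)
  finally have c: "real (card (Zplus B)) \<le> real (nat (2*K+1)) * real (nat (2*K+1))"
    by (metis of_nat_le_iff of_nat_mult)
  have "real (nat (2*K+1)) = 2 * real_of_int K + 1" using K0 by simp
  also have "\<dots> \<le> 3 * B powr (1/3)" using r1 unfolding K_def by linarith
  finally have k3: "real (nat (2*K+1)) \<le> 3 * B powr (1/3)" .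
  have "real (nat (2*K+1)) * real (nat (2*K+1)) \<le> (3 * B powr (1/3)) * (3 * B powr (1/3))"
    using k3 by (intro mult_mono) auto
  also have "\<dots> = 9 * (B powr (1/3) * B powr (1/3))" by simp
  also have "B powr (1/3) * B powr (1/3) = B powr (2/3)" by (simp add: powr_add[symmetric])
  finally show ?thesis using c by linarith
qed


lemma NU_finite: "finite (NU_set B)"
proof -
  define k where "k = \<lceil>B\<rceil> + \<lceil>B^2\<rceil>"
  have "NU_set B \<subseteq> {-k..k} \<times> {-k..k} \<times> {-k..k} \<times> {-k..k}"
  proof
    fix x assume xin: "x \<in> NU_set B"
    obtain x0 x1 x2 x3 where x: "x = (x0,x1,x2,x3)" by (cases x) auto
    from xin have bd: "real_of_int \<bar>x1\<bar> \<le> B" "real_of_int \<bar>x2\<bar> \<le> B" "real_of_int \<bar>x3\<bar> \<le> B"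
      "real_of_int \<bar>x0\<bar> \<le> B^2" unfolding x NU_set_def by auto
    have B0: "B \<ge> 0" using bd(1) by (meson abs_ge_zero of_int_0_le_iff order_trans)
    have "-1 < B^2" by (smt (verit) zero_le_power2)
    then have c1: "\<lceil>B\<rceil> \<ge> 0" "\<lceil>B^2\<rceil> \<ge> 0" using B0 by (simp_all add: ceiling_le_zero)
    have "\<bar>x1\<bar> \<le> \<lceil>B\<rceil>" "\<bar>x2\<bar> \<le> \<lceil>B\<rceil>" "\<bar>x3\<bar> \<le> \<lceil>B\<rceil>" "\<bar>x0\<bar> \<le> \<lceil>B^2\<rceil>"
      using bd by (meson le_ceiling_iff order_refl le_of_int_ceiling order_trans of_int_le_iff)+
    then show "x \<in> {-k..k} \<times> {-k..k} \<times> {-k..k} \<times> {-k..k}" unfolding x k_def using c1 by auto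
  qed
  then show ?thesis by (rule finite_subset) simp
qed

lemma NU_neg1: "(x0,x1,x2,x3) \<in> NU_set B \<Longrightarrow> (x0,-x1,-x2,-x3) \<in> NU_set B"
  unfolding NU_set_def by (simp add: power_minus_odd)

lemma NU_neg0: "(x0,x1,x2,x3) \<in> NU_set B \<Longrightarrow> (-x0,x1,x2,x3) \<in> NU_set B"
  unfolding NU_set_def by simp

definition "Pset B = {(x0,x1,x2,x3). (x0,x1,x2,x3) \<in> NU_set B \<and> x1 > 0}"
definition "Nset B = {(x0,x1,x2,x3). (x0,x1,x2,x3) \<in> NU_set B \<and> x1 < 0}"
definition "Sminus B = {(x0,x1,x2,x3). (x0,x1,x2,x3) \<in> NU_set B \<and> x1 > 0 \<and> x0 < 0}"
definition n1 :: "int \<times> int \<times> int \<times> int \<Rightarrow> int \<times> int \<times> int \<times> int" where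
  "n1 = (\<lambda>(x0,x1,x2,x3). (x0,-x1,-x2,-x3))"
definition n0 :: "int \<times> int \<times> int \<times> int \<Rightarrow> int \<times> int \<times> int \<times> int" where
  "n0 = (\<lambda>(x0,x1,x2,x3). (-x0,x1,x2,x3))"

lemma inj_n1: "inj n1" unfolding n1_def by (auto intro!: injI)
lemma inj_n0: "inj n0" unfolding n0_def by (auto intro!: injI)

lemma Nset_img: "Nset B = n1 ` Pset B"
proof
  show "n1 ` Pset B \<subseteq> Nset B"
    unfolding Pset_def Nset_def n1_def by (auto intro: NU_neg1)
  show "Nset B \<subseteq> n1 ` Pset B"
  proof
    fix x assume "x \<in> Nset B"
    then obtain x0 x1 x2 x3 where x: "x = (x0,x1,x2,x3)" and xin: "(x0,x1,x2,x3) \<in> NU_set B" "x1 < 0"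
      unfolding Nset_def by auto
    have "(x0,-x1,-x2,-x3) \<in> Pset B" using NU_neg1[OF xin(1)] xin(2) unfolding Pset_def by simp
    moreover have "x = n1 (x0,-x1,-x2,-x3)" unfolding x n1_def by simp
    ultimately show "x \<in> n1 ` Pset B" by blast
  qed
qed

lemma Sminus_img: "Sminus B = n0 ` Splus B"
proof
  show "n0 ` Splus B \<subseteq> Sminus B"
    unfolding Splus_def Sminus_def n0_def by (auto intro: NU_neg0)
  show "Sminus B \<subseteq> n0 ` Splus B"
  proof
    fix x assume "x \<in> Sminus B"
    then obtain x0 x1 x2 x3 where x: "x = (x0,x1,x2,x3)" and xin: "(x0,x1,x2,x3) \<in> NU_set B" "x1 > 0" "x0 < 0"
      unfolding Sminus_def by auto
    have "(-x0,x1,x2,x3) \<in> Splus B" using NU_neg0[OF xin(1)] xin(2,3) unfolding Splus_def by simp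
    moreover have "x = n0 (-x0,x1,x2,x3)" unfolding x n0_def by simp
    ultimately show "x \<in> n0 ` Splus B" by blast
  qed
qed

lemma card_NU: "card (NU_set B) = 2 * (2 * card (Splus B) + card (Zplus B))"
proof -
  have fin: "finite (NU_set B)" by (rule NU_finite)
  have sub: "Pset B \<subseteq> NU_set B" "Nset B \<subseteq> NU_set B" "Splus B \<subseteq> NU_set B" "Sminus B \<subseteq> NU_set B"
    "Zplus B \<subseteq> NU_set B"
    unfolding Pset_def Nset_def Splus_def Sminus_def Zplus_def by auto
  have fins: "finite (Pset B)" "finite (Nset B)" "finite (Splus B)" "finite (Sminus B)" "finite (Zplus B)"
    using sub fin by (auto intro: finite_subset)
  have u1: "NU_set B = Pset B \<union> Nset B"
    unfolding Pset_def Nset_def NU_set_def by auto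
  have d1: "Pset B \<inter> Nset B = {}" unfolding Pset_def Nset_def by auto
  have u2: "Pset B = (Splus B \<union> Sminus B) \<union> Zplus B"
    unfolding Pset_def Splus_def Sminus_def Zplus_def by auto
  have d2: "Splus B \<inter> Sminus B = {}" "(Splus B \<union> Sminus B) \<inter> Zplus B = {}"
    unfolding Splus_def Sminus_def Zplus_def by auto
  have cN: "card (Nset B) = card (Pset B)" unfolding Nset_img
    by (rule card_image) (rule inj_on_subset[OF inj_n1], simp)
  have cS: "card (Sminus B) = card (Splus B)" unfolding Sminus_img
    by (rule card_image) (rule inj_on_subset[OF inj_n0], simp)
  have "card (NU_set B) = card (Pset B) + card (Nset B)"
    unfolding u1 using fins(1,2) d1 by (rule card_Un_disjoint)
  moreover have "card (Pset B) = card (Splus B) + card (Sminus B) + card (Zplus B)"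
    unfolding u2 using fins d2 by (simp add: card_Un_disjoint)
  ultimately show ?thesis using cN cS by simp
qed

lemma card_N: "card (N_set B) = card (Splus B)"
proof -
  have "Phi ` N_set B = Splus B"
  proof
    show "Phi ` N_set B \<subseteq> Splus B"
    proof
      fix y assume "y \<in> Phi ` N_set B"
      then obtain t where t: "t \<in> N_set B" "y = Phi t" by blast
      obtain e1 e2 e3 e4 e5 e6 e7 e8 a1 a2 a3 where te: "t = (e1,e2,e3,e4,e5,e6,e7,e8,a1,a2,a3)"
        by (cases t) auto
      have "torsor_cond B e1 e2 e3 e4 e5 e6 e7 e8 a1 a2 a3" using t(1) te unfolding N_set_def by simp
      then show "y \<in> Splus B" using phi_valid t(2) te by simp
    qed
    show "Splus B \<subseteq> Phi ` N_set B"
    proof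
      fix x assume xin: "x \<in> Splus B"
      obtain x0 x1 x2 x3 where x: "x = (x0,x1,x2,x3)" by (cases x) auto
      show "x \<in> Phi ` N_set B" using psi_surj[of x0 x1 x2 x3 B] xin unfolding x by force
    qed
  qed
  then show ?thesis using card_image[OF phi_inj] by metis
qed

theorem lemma9p2:
  shows "(\<lambda>B. N_U B - 2 * calN B) \<in> O[at_top](\<lambda>B. B powr (2/3))"
proof (rule bigoI[where c = 9])
  show "eventually (\<lambda>B. norm (N_U B - 2 * calN B) \<le> 9 * norm (B powr (2/3))) at_top"
    unfolding eventually_at_top_linorder
  proof (intro exI allI impI)
    fix B :: real assume B: "B \<ge> 1"
    have "N_U B - 2 * calN B = real (card (Zplus B))"
      unfolding N_U_def calN_def card_NU card_N by (simp add: field_simps)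
    then show "norm (N_U B - 2 * calN B) \<le> 9 * norm (B powr (2/3))"
      using Zplus_card[OF B] by simp
  qed
qed


end
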